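(* Let $1\le p<2$ and let $(X_n)$ be a determining sequence with $\sup_n\|X_n\|_p<\infty$, $\{|X_n|^p\}$ uniformly integrable, $X_n\to0$ weakly in $L^p$, and limit random measure $\mu$. Suppose that for every increasing sequence $(m_k)$ of positive integers, $\sup_{N\ge1}\|N^{-1/2}\sum_{k=1}^NX_{m_k}\|_p<\infty$. Then $\int_{-\infty}^\infty x^2\,d\mu(x)<\infty$ almost surely.
   Context: Determining sequence: for every $A\in\mathcal F$ with $P(A)>0$ there is a distribution function $F_A$ with $P(X_n\le t\mid A)\to F_A(t)$ at every continuity point $t$ of $F_A$. The limit random measure $\mu$ is a random probability measure on $\mathbb R$ (measurable w.r.t. the Prohorov metric) with $F_A(t)=P(A)^{-1}\int_A\mu(-\infty,t]\,dP$ for every such $A$ and continuity point $t$ of $F_A$. *)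

theory Defs
  imports "HOL-Probability.Probability"
begin

definition Lp_pow :: "'a measure \<Rightarrow> real \<Rightarrow> ('a \<Rightarrow> real) \<Rightarrow> ennreal" where
  "Lp_pow M p f = (\<integral>\<^sup>+ x. ennreal (\<bar>f x\<bar> powr p) \<partial>M)"

definition in_Lp :: "'a measure \<Rightarrow> ereal \<Rightarrow> ('a \<Rightarrow> real) \<Rightarrow> bool" where
  "in_Lp M q g \<longleftrightarrow> g \<in> borel_measurable M \<and>
     (if q = \<infinity> then (\<exists>B. AE x in M. \<bar>g x\<bar> \<le> B)
      else Lp_pow M (real_of_ereal q) g < \<infinity>)"

definition conj_exp :: "real \<Rightarrow> ereal" where
  "conj_exp p = (if p = 1 then \<infinity> else ereal (p / (p - 1)))"

definition weak_Lp_to_zero :: "'a measure \<Rightarrow> real \<Rightarrow> (nat \<Rightarrow> 'a \<Rightarrow> real) \<Rightarrow> bool" where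
  "weak_Lp_to_zero M p X \<longleftrightarrow>
     (\<forall>g. in_Lp M (conj_exp p) g \<longrightarrow>
        ((\<lambda>n. \<integral>x. X n x * g x \<partial>M) \<longlonglongrightarrow> 0))"

definition unif_integrable :: "'a measure \<Rightarrow> (nat \<Rightarrow> 'a \<Rightarrow> real) \<Rightarrow> bool" where
  "unif_integrable M Y \<longleftrightarrow> (\<forall>n. Y n \<in> borel_measurable M) \<and>
     (\<forall>e>0. \<exists>K. \<forall>n.
        (\<integral>\<^sup>+ x. ennreal \<bar>Y n x\<bar> * indicator {y \<in> space M. \<bar>Y n y\<bar> > K} x \<partial>M) < ennreal e)"

definition distribution_function :: "(real \<Rightarrow> real) \<Rightarrow> bool" where
  "distribution_function F \<longleftrightarrow> mono F \<and> (\<forall>t. continuous (at_right t) F) \<and>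
     (F \<longlongrightarrow> 0) at_bot \<and> (F \<longlongrightarrow> 1) at_top"

definition cond_limit_df ::
  "'a measure \<Rightarrow> (nat \<Rightarrow> 'a \<Rightarrow> real) \<Rightarrow> 'a set \<Rightarrow> (real \<Rightarrow> real) \<Rightarrow> bool" where
  "cond_limit_df M X A F \<longleftrightarrow> distribution_function F \<and>
     (\<forall>t. isCont F t \<longrightarrow>
        ((\<lambda>n. measure M ({x \<in> space M. X n x \<le> t} \<inter> A) / measure M A) \<longlonglongrightarrow> F t))"

definition determining :: "'a measure \<Rightarrow> (nat \<Rightarrow> 'a \<Rightarrow> real) \<Rightarrow> bool" where
  "determining M X \<longleftrightarrow> (\<forall>n. X n \<in> borel_measurable M) \<and>
     (\<forall>A \<in> sets M. measure M A > 0 \<longrightarrow> (\<exists>F. cond_limit_df M X A F))"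

text \<open>Limit random measure: a measurable map into probability measures on the
  real line (Giry monad sigma-algebra) representing every F_A.\<close>
definition limit_random_measure ::
  "'a measure \<Rightarrow> (nat \<Rightarrow> 'a \<Rightarrow> real) \<Rightarrow> ('a \<Rightarrow> real measure) \<Rightarrow> bool" where
  "limit_random_measure M X \<mu> \<longleftrightarrow> \<mu> \<in> M \<rightarrow>\<^sub>M prob_algebra borel \<and>
     (\<forall>A \<in> sets M. measure M A > 0 \<longrightarrow> (\<forall>F. cond_limit_df M X A F \<longrightarrow>
        (\<forall>t. isCont F t \<longrightarrow>
           F t = (\<integral>x. indicator A x * measure (\<mu> x) {..t} \<partial>M) / measure M A)))"

end

theory Submission
  imports Defs
begin


lemma rc_eq_countable:
  fixes F G :: "real \<Rightarrow> real"
  assumes "\<And>t. continuous (at_right t) F" "\<And>t. continuous (at_right t) G"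
    and "countable D" and "\<And>s. s \<notin> D \<Longrightarrow> F s = G s"
  shows "F = G"
proof
  fix t
  show "F t = G t"
  proof (rule ccontr)
    assume ne: "F t \<noteq> G t"
    define e where "e = \<bar>F t - G t\<bar> / 2"
    have e: "e > 0" using ne by (simp add: e_def)
    have "\<forall>\<^sub>F s in at_right t. dist (F s) (F t) < e"
      using assms(1)[of t] e unfolding continuous_within tendsto_iff by auto
    moreover have "\<forall>\<^sub>F s in at_right t. dist (G s) (G t) < e"
      using assms(2)[of t] e unfolding continuous_within tendsto_iff by auto
    ultimately have "\<forall>\<^sub>F s in at_right t. dist (F s) (F t) < e \<and> dist (G s) (G t) < e"
      by (rule eventually_conj)
    then obtain b where b: "b > t" "\<And>s. t < s \<Longrightarrow> s < b \<Longrightarrow> dist (F s) (F t) < e \<and> dist (G s) (G t) < e"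
      unfolding eventually_at_right_field by auto
    obtain s where s: "s \<in> {t<..<b}" "s \<notin> D"
      using open_minus_countable[OF assms(3), of "{t<..<b}"] b by auto
    then have "dist (F s) (F t) < e" "dist (G s) (G t) < e" using b by auto
    moreover have "F s = G s" using s assms(4) by auto
    ultimately show False unfolding e_def dist_real_def
      by (cases "F t \<ge> G t"; cases "F s \<ge> F t"; cases "G s \<ge> G t") (auto simp: abs_if split: if_splits)
  qed
qed

lemma abs_bound_int:
  fixes f g :: "'a \<Rightarrow> real"
  assumes "integrable M f" "integrable M g" "\<And>x. x \<in> space M \<Longrightarrow> \<bar>f x\<bar> \<le> g x"
  shows "\<bar>\<integral>x. f x \<partial>M\<bar> \<le> (\<integral>x. g x \<partial>M)"
proof -
  have "\<bar>\<integral>x. f x \<partial>M\<bar> \<le> (\<integral>x. \<bar>f x\<bar> \<partial>M)" by (rule integral_abs_bound)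
  also have "\<dots> \<le> (\<integral>x. g x \<partial>M)"
    using assms by (intro integral_mono) auto
  finally show ?thesis .
qed

lemma approx_tendsto:
  fixes a :: "nat \<Rightarrow> real"
  assumes "\<And>k n. \<bar>a n - b k n\<bar> \<le> e k" "\<And>k. b k \<longlonglongrightarrow> L' k"
    "\<And>k. \<bar>L' k - L\<bar> \<le> e k" "e \<longlonglongrightarrow> 0"
  shows "a \<longlonglongrightarrow> L"
proof (rule LIMSEQ_I)
  fix r :: real assume r: "0 < r"
  obtain k where k: "\<bar>e k\<bar> < r / 3"
    using LIMSEQ_D[OF assms(4), of "r/3"] r by auto
  obtain n0 where n0: "\<And>n. n \<ge> n0 \<Longrightarrow> norm (b k n - L' k) < r / 3"
    using LIMSEQ_D[OF assms(2)[of k], of "r/3"] r by auto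
  show "\<exists>no. \<forall>n\<ge>no. norm (a n - L) < r"
  proof (intro exI allI impI)
    fix n assume "n \<ge> n0"
    then have "\<bar>b k n - L' k\<bar> < r/3" using n0 by auto
    moreover have "\<bar>a n - b k n\<bar> \<le> e k" "\<bar>L' k - L\<bar> \<le> e k" using assms by auto
    ultimately show "norm (a n - L) < r" using k unfolding real_norm_def abs_le_iff abs_less_iff by linarith
  qed
qed

locale detsetup = prob_space M for M :: "'a measure" +
  fixes X :: "nat \<Rightarrow> 'a \<Rightarrow> real" and \<mu> :: "'a \<Rightarrow> real measure"
  assumes det: "determining M X" and lrm: "limit_random_measure M X \<mu>"
begin

lemma X_meas[measurable]: "X n \<in> borel_measurable M"
  using det unfolding determining_def by auto

lemma mu_meas[measurable]: "\<mu> \<in> M \<rightarrow>\<^sub>M prob_algebra borel"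
  using lrm unfolding limit_random_measure_def by auto

lemma mu_sub[measurable]: "\<mu> \<in> M \<rightarrow>\<^sub>M subprob_algebra borel"
  using mu_meas by (rule measurable_prob_algebraD)

lemma mu_prob: "x \<in> space M \<Longrightarrow> prob_space (\<mu> x)"
  using measurable_space[OF mu_meas] by (auto simp: space_prob_algebra)

lemma mu_sets: "x \<in> space M \<Longrightarrow> sets (\<mu> x) = sets borel"
  using measurable_space[OF mu_meas] by (auto simp: space_prob_algebra)

lemma U_integral:
  fixes g :: "'a \<Rightarrow> real"
  assumes A: "A \<in> sets M" "measure M A > 0" and g[measurable]: "g \<in> borel_measurable M"
  shows "integral\<^sup>L (uniform_measure M A) g = (\<integral>\<omega>. g \<omega> * indicator A \<omega> \<partial>M) / measure M A"
proof -
  have "(\<lambda>x. indicator A x / emeasure M A) = (\<lambda>x. ennreal (indicator A x / measure M A))"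
    using A divide_ennreal[of 1 "measure M A"] by (auto simp: emeasure_eq_measure split: split_indicator)
  then have "uniform_measure M A = density M (\<lambda>x. ennreal (indicator A x / measure M A))"
    unfolding uniform_measure_def by simp
  then have "integral\<^sup>L (uniform_measure M A) g = (\<integral>x. (indicator A x / measure M A) *\<^sub>R g x \<partial>M)"
    using A by (simp add: integral_density)
  also have "\<dots> = (\<integral>x. (g x * indicator A x) / measure M A \<partial>M)"
    by (intro Bochner_Integration.integral_cong) auto
  also have "\<dots> = (\<integral>\<omega>. g \<omega> * indicator A \<omega> \<partial>M) / measure M A"
    by simp
  finally show ?thesis .
qed

lemma R1_pos:
  fixes f :: "real \<Rightarrow> real"
  assumes A[measurable]: "A \<in> sets M" and PA: "measure M A > 0"
    and f: "\<And>x. isCont f x" "\<And>x. \<bar>f x\<bar> \<le> B"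
  shows "(\<lambda>n. \<integral>\<omega>. f (X n \<omega>) * indicator A \<omega> \<partial>M)
           \<longlonglongrightarrow> (\<integral>\<omega>. (\<integral>y. f y \<partial>\<mu> \<omega>) * indicator A \<omega> \<partial>M)"
proof -
  have fm[measurable]: "f \<in> borel_measurable borel"
    using f(1) by (intro borel_measurable_continuous_onI continuous_at_imp_continuous_on) auto
  define U where "U = uniform_measure M A"
  have eA: "emeasure M A \<noteq> 0" "emeasure M A \<noteq> \<infinity>"
    using PA by (auto simp: emeasure_eq_measure)
  interpret U: prob_space U unfolding U_def by (rule prob_space_uniform_measure[OF eA])
  have sU[measurable_cong]: "sets U = sets M" and spU: "space U = space M" by (auto simp: U_def)
  have XU[measurable]: "X n \<in> borel_measurable U" for n
    using X_meas by (simp add: measurable_cong_sets[OF sU refl])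
  have muU: "\<mu> \<in> U \<rightarrow>\<^sub>M prob_algebra borel"
    using mu_meas by (simp add: measurable_cong_sets[OF sU refl])
  have muUs: "\<mu> \<in> U \<rightarrow>\<^sub>M subprob_algebra borel"
    using mu_sub by (simp add: measurable_cong_sets[OF sU refl])
  obtain F where cF: "cond_limit_df M X A F"
    using det A PA unfolding determining_def by auto
  have Fdf: "distribution_function F" using cF by (simp add: cond_limit_df_def)
  define Mn where "Mn n = distr U borel (X n)" for n
  define \<nu> where "\<nu> = U \<bind> \<mu>"
  have rdMn: "real_distribution (Mn n)" for n
    unfolding Mn_def real_distribution_def real_distribution_axioms_def
    by (auto intro!: U.prob_space_distr)
  have Uin: "U \<in> space (prob_algebra M)"
    by (auto simp: space_prob_algebra sU U.prob_space_axioms)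
  have rdnu: "real_distribution \<nu>"
    unfolding \<nu>_def real_distribution_def real_distribution_axioms_def
    using prob_space_bind'[OF Uin mu_meas] sets_bind'[OF Uin mu_meas] by auto
  interpret nu: real_distribution \<nu> by (rule rdnu)
  have cdf_Mn: "cdf (Mn n) t = measure M ({x \<in> space M. X n x \<le> t} \<inter> A) / measure M A" for n t
  proof -
    have "cdf (Mn n) t = measure U (X n -` {..t} \<inter> space U)"
      unfolding cdf_def Mn_def by (subst measure_distr) auto
    also have "X n -` {..t} \<inter> space U = {x \<in> space M. X n x \<le> t}" by (auto simp: spU)
    also have "measure U {x \<in> space M. X n x \<le> t} = measure M (A \<inter> {x \<in> space M. X n x \<le> t}) / measure M A"
      unfolding U_def by (subst measure_uniform_measure[OF eA]) auto
    finally show ?thesis by (simp add: Int_commute)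
  qed
  have cdf_nu: "cdf \<nu> t = (\<integral>\<omega>. indicator A \<omega> * measure (\<mu> \<omega>) {..t} \<partial>M) / measure M A" for t
  proof -
    have "emeasure \<nu> {..t} = (\<integral>\<^sup>+\<omega>. emeasure (\<mu> \<omega>) {..t} \<partial>U)"
      unfolding \<nu>_def by (rule emeasure_bind[OF _ muUs]) (auto simp: spU not_empty)
    also have "\<dots> = (\<integral>\<^sup>+\<omega>. ennreal (measure (\<mu> \<omega>) {..t}) \<partial>U)"
      by (intro nn_integral_cong) (auto simp: spU finite_measure.emeasure_eq_measure[OF prob_space.finite_measure[OF mu_prob]])
    also have "\<dots> = ennreal (\<integral>\<omega>. measure (\<mu> \<omega>) {..t} \<partial>U)"
      by (intro nn_integral_eq_integral U.integrable_const_bound[where B=1]) (auto simp: measure_nonneg spU intro!: AE_I2 prob_space.prob_le_1[OF mu_prob])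
    finally have "measure \<nu> {..t} = (\<integral>\<omega>. measure (\<mu> \<omega>) {..t} \<partial>U)"
      by (simp add: nu.emeasure_eq_measure measure_nonneg integral_nonneg_AE)
    also have "\<dots> = (\<integral>\<omega>. measure (\<mu> \<omega>) {..t} * indicator A \<omega> \<partial>M) / measure M A"
      unfolding U_def by (rule U_integral[OF A PA]) measurable
    finally show ?thesis by (simp add: cdf_def mult.commute)
  qed
  have F_eq: "F = cdf \<nu>"
  proof (rule rc_eq_countable[where D="{t. \<not> isCont F t}"])
    show "continuous (at_right t) F" for t using Fdf by (simp add: distribution_function_def)
    show "continuous (at_right t) (cdf \<nu>)" for t by (rule nu.cdf_is_right_cont)
    show "countable {t. \<not> isCont F t}"
      using Fdf by (intro mono_ctble_discont) (simp add: distribution_function_def)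
    show "F s = cdf \<nu> s" if "s \<notin> {t. \<not> isCont F t}" for s
      using that lrm cF A PA unfolding limit_random_measure_def cdf_nu by auto
  qed
  have wc: "weak_conv_m Mn \<nu>"
    unfolding weak_conv_m_def weak_conv_def
  proof (intro allI impI)
    fix t assume "isCont (cdf \<nu>) t"
    then have "isCont F t" by (simp add: F_eq)
    then have "(\<lambda>n. measure M ({x \<in> space M. X n x \<le> t} \<inter> A) / measure M A) \<longlonglongrightarrow> F t"
      using cF by (simp add: cond_limit_df_def)
    then show "(\<lambda>n. cdf (Mn n) t) \<longlonglongrightarrow> cdf \<nu> t" by (simp add: cdf_Mn F_eq)
  qed
  have conv: "(\<lambda>n. integral\<^sup>L (Mn n) f) \<longlonglongrightarrow> integral\<^sup>L \<nu> f"
    by (rule weak_conv_imp_integral_bdd_continuous_conv[OF rdMn rdnu wc, of f B]) (use f in auto)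
  have eMn: "integral\<^sup>L (Mn n) f = (\<integral>\<omega>. f (X n \<omega>) * indicator A \<omega> \<partial>M) / measure M A" for n
  proof -
    have "integral\<^sup>L (Mn n) f = (\<integral>\<omega>. f (X n \<omega>) \<partial>U)"
      unfolding Mn_def by (rule integral_distr) auto
    also have "\<dots> = (\<integral>\<omega>. f (X n \<omega>) * indicator A \<omega> \<partial>M) / measure M A"
      unfolding U_def by (rule U_integral[OF A PA]) measurable
    finally show ?thesis .
  qed
  have enu: "integral\<^sup>L \<nu> f = (\<integral>\<omega>. (\<integral>y. f y \<partial>\<mu> \<omega>) * indicator A \<omega> \<partial>M) / measure M A"
  proof -
    have "integral\<^sup>L \<nu> f = (\<integral>\<omega>. (\<integral>y. f y \<partial>\<mu> \<omega>) \<partial>U)"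
      unfolding \<nu>_def
      by (rule integral_bind[OF fm _ muUs, where B=B and B'=1])
         (use f in \<open>auto simp: U.finite_measure_axioms spU intro!: AE_I2 simp: prob_space.emeasure_space_1[OF mu_prob]\<close>)
    also have "\<dots> = (\<integral>\<omega>. (\<integral>y. f y \<partial>\<mu> \<omega>) * indicator A \<omega> \<partial>M) / measure M A"
      unfolding U_def
      by (rule U_integral[OF A PA]) (rule measurable_compose[OF mu_sub integral_measurable_subprob_algebra[OF fm]])
    finally show ?thesis .
  qed
  have "(\<lambda>n. integral\<^sup>L (Mn n) f * measure M A) \<longlonglongrightarrow> integral\<^sup>L \<nu> f * measure M A"
    by (intro tendsto_mult_right conv)
  then show ?thesis using PA by (simp add: eMn enu)
qed

lemma G_meas[measurable]:
  assumes "f \<in> borel_measurable borel"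
  shows "(\<lambda>\<omega>. \<integral>y. f y \<partial>\<mu> \<omega> :: real) \<in> borel_measurable M"
  by (rule measurable_compose[OF mu_sub integral_measurable_subprob_algebra[OF assms]])

lemma G_bound:
  fixes f :: "real \<Rightarrow> real"
  assumes "\<omega> \<in> space M" "f \<in> borel_measurable borel" "\<And>x. \<bar>f x\<bar> \<le> B"
  shows "\<bar>\<integral>y. f y \<partial>\<mu> \<omega>\<bar> \<le> B"
proof -
  interpret P: prob_space "\<mu> \<omega>" by (rule mu_prob[OF assms(1)])
  have fm: "f \<in> borel_measurable (\<mu> \<omega>)"
    using assms(2) measurable_cong_sets[OF mu_sets[OF assms(1)] refl] by auto
  have "\<bar>\<integral>y. f y \<partial>\<mu> \<omega>\<bar> \<le> (\<integral>y. B \<partial>\<mu> \<omega>)"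
    by (rule integral_abs_bound_integral) (use assms fm in \<open>auto intro!: P.integrable_const_bound[where B=B]\<close>)
  then show ?thesis by (simp add: P.prob_space)
qed

lemma R1_ind:
  fixes f :: "real \<Rightarrow> real"
  assumes A[measurable]: "A \<in> sets M"
    and f: "\<And>x. isCont f x" "\<And>x. \<bar>f x\<bar> \<le> B"
  shows "(\<lambda>n. \<integral>\<omega>. f (X n \<omega>) * indicator A \<omega> \<partial>M)
           \<longlonglongrightarrow> (\<integral>\<omega>. (\<integral>y. f y \<partial>\<mu> \<omega>) * indicator A \<omega> \<partial>M)"
proof cases
  assume "measure M A > 0" then show ?thesis using R1_pos[OF A _ f] by auto
next
  assume "\<not> measure M A > 0"
  then have "A \<in> null_sets M" using A by (auto simp: null_sets_def emeasure_eq_measure measure_nonneg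
      intro: antisym)
  then have ae: "AE \<omega> in M. \<omega> \<notin> A" by (rule AE_not_in)
  have z: "(\<integral>\<omega>. g \<omega> * indicator A \<omega> \<partial>M) = 0" for g :: "'a \<Rightarrow> real"
    by (rule integral_eq_zero_AE) (use ae in \<open>auto simp: indicator_def\<close>)
  show ?thesis by (simp only: z) simp
qed

lemma R1:
  fixes f :: "real \<Rightarrow> real" and \<psi> :: "'a \<Rightarrow> real"
  assumes \<psi>[measurable]: "\<psi> \<in> borel_measurable M" and \<psi>b: "\<And>\<omega>. \<omega> \<in> space M \<Longrightarrow> 0 \<le> \<psi> \<omega> \<and> \<psi> \<omega> \<le> C"
    and f: "\<And>x. isCont f x" "\<And>x. \<bar>f x\<bar> \<le> B"
  shows "(\<lambda>n. \<integral>\<omega>. f (X n \<omega>) * \<psi> \<omega> \<partial>M)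
           \<longlonglongrightarrow> (\<integral>\<omega>. (\<integral>y. f y \<partial>\<mu> \<omega>) * \<psi> \<omega> \<partial>M)"
proof -
  have fm[measurable]: "f \<in> borel_measurable borel"
    using f(1) by (intro borel_measurable_continuous_onI continuous_at_imp_continuous_on) auto
  define G where "G \<omega> = (\<integral>y. f y \<partial>\<mu> \<omega>)" for \<omega>
  have Gm[measurable]: "G \<in> borel_measurable M" unfolding G_def by (rule G_meas[OF fm])
  have Gb: "\<omega> \<in> space M \<Longrightarrow> \<bar>G \<omega>\<bar> \<le> B" for \<omega> unfolding G_def by (rule G_bound[OF _ fm f(2)])
  have B0: "0 \<le> B" using f(2)[of 0] by linarith
  define K where "K k = real (Suc k)" for k
  define J where "J k = nat \<lceil>K k * C\<rceil>" for k
  define As where "As k j = {\<omega> \<in> space M. nat \<lfloor>K k * \<psi> \<omega>\<rfloor> = j}" for k j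
  have As[measurable]: "As k j \<in> sets M" for k j unfolding As_def by measurable
  define ps where "ps k \<omega> = (\<Sum>j\<le>J k. (real j / K k) * indicator (As k j) \<omega>)" for k \<omega>
  have Kpos: "K k > 0" for k by (simp add: K_def)
  have ps_eq: "ps k \<omega> = real (nat \<lfloor>K k * \<psi> \<omega>\<rfloor>) / K k" if "\<omega> \<in> space M" for k \<omega>
  proof -
    have "nat \<lfloor>K k * \<psi> \<omega>\<rfloor> \<le> J k"
      unfolding J_def using \<psi>b[OF that] Kpos[of k]
      by (intro nat_mono order_trans[OF floor_le_ceiling ceiling_mono] mult_left_mono) auto
    have "ps k \<omega> = (\<Sum>j\<le>J k. if j = nat \<lfloor>K k * \<psi> \<omega>\<rfloor> then real (nat \<lfloor>K k * \<psi> \<omega>\<rfloor>) / K k else 0)"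
      unfolding ps_def by (intro sum.cong refl) (simp add: As_def indicator_def that)
    also have "\<dots> = real (nat \<lfloor>K k * \<psi> \<omega>\<rfloor>) / K k"
      using \<open>nat \<lfloor>K k * \<psi> \<omega>\<rfloor> \<le> J k\<close> by (subst sum.delta) auto
    finally show ?thesis .
  qed
  have ps_close: "\<bar>\<psi> \<omega> - ps k \<omega>\<bar> \<le> 1 / K k" if "\<omega> \<in> space M" for k \<omega>
  proof -
    have p0: "0 \<le> K k * \<psi> \<omega>" using \<psi>b[OF that] Kpos[of k] by simp
    have "real (nat \<lfloor>K k * \<psi> \<omega>\<rfloor>) = of_int \<lfloor>K k * \<psi> \<omega>\<rfloor>" using p0 by simp
    then have "real (nat \<lfloor>K k * \<psi> \<omega>\<rfloor>) \<le> K k * \<psi> \<omega>" "K k * \<psi> \<omega> < real (nat \<lfloor>K k * \<psi> \<omega>\<rfloor>) + 1"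
      by linarith+
    then have "\<bar>K k * \<psi> \<omega> - real (nat \<lfloor>K k * \<psi> \<omega>\<rfloor>)\<bar> \<le> 1" by linarith
    then have "\<bar>\<psi> \<omega> - real (nat \<lfloor>K k * \<psi> \<omega>\<rfloor>) / K k\<bar> \<le> 1 / K k"
    proof -
      have "\<psi> \<omega> - real (nat \<lfloor>K k * \<psi> \<omega>\<rfloor>) / K k = (K k * \<psi> \<omega> - real (nat \<lfloor>K k * \<psi> \<omega>\<rfloor>)) / K k"
        using Kpos[of k] by (simp add: field_simps)
      then show ?thesis using Kpos[of k] \<open>\<bar>K k * \<psi> \<omega> - real (nat \<lfloor>K k * \<psi> \<omega>\<rfloor>)\<bar> \<le> 1\<close>
        by (simp add: divide_right_mono)
    qed
    then show ?thesis using ps_eq[OF that] by simp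
  qed
  have psm[measurable]: "ps k \<in> borel_measurable M" for k unfolding ps_def by measurable
  have psb: "\<bar>ps k \<omega>\<bar> \<le> C + 1" if "\<omega> \<in> space M" for k \<omega>
  proof -
    have "1 / K k \<le> 1" using Kpos[of k] by (simp add: K_def)
    then show ?thesis using ps_close[OF that, of k] \<psi>b[OF that] unfolding abs_le_iff by linarith
  qed
  have bint: "integrable M h" if "h \<in> borel_measurable M" "\<And>\<omega>. \<omega> \<in> space M \<Longrightarrow> \<bar>h \<omega>\<bar> \<le> D" for h :: "'a \<Rightarrow> real" and D :: real
    by (rule integrable_const_bound[where B=D]) (use that in \<open>auto intro!: AE_I2\<close>)
  have pb: "\<bar>a * b\<bar> \<le> B * D" if "\<bar>a\<bar> \<le> B" "\<bar>b\<bar> \<le> D" for a b D :: real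
    using that by (simp add: abs_mult mult_mono B0)
  have fXb: "\<bar>f (X n \<omega>)\<bar> \<le> B" for n \<omega> by (rule f(2))
  have \<psi>ab: "\<bar>\<psi> \<omega>\<bar> \<le> C" if "\<omega> \<in> space M" for \<omega> using \<psi>b[OF that] by simp
  have i1: "integrable M (\<lambda>\<omega>. f (X n \<omega>) * \<psi> \<omega>)" for n
    by (rule bint[of _ "B*C"]) (auto intro!: pb fXb \<psi>ab)
  have i2: "integrable M (\<lambda>\<omega>. f (X n \<omega>) * ps k \<omega>)" for n k
    by (rule bint[of _ "B*(C+1)"]) (auto intro!: pb fXb psb)
  have i3: "integrable M (\<lambda>\<omega>. G \<omega> * \<psi> \<omega>)"
    by (rule bint[of _ "B*C"]) (auto intro!: pb Gb \<psi>ab)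
  have i4: "integrable M (\<lambda>\<omega>. G \<omega> * ps k \<omega>)" for k
    by (rule bint[of _ "B*(C+1)"]) (auto intro!: pb Gb psb)
  have i5: "integrable M (\<lambda>\<omega>. g \<omega> * indicator A \<omega>)"
    if "g \<in> borel_measurable M" "\<And>\<omega>. \<omega> \<in> space M \<Longrightarrow> \<bar>g \<omega>\<bar> \<le> B" "A \<in> sets M" for g A
    by (rule bint[of _ "B"]) (use that in \<open>auto simp: indicator_def B0\<close>)
  have "(\<lambda>n. \<integral>\<omega>. f (X n \<omega>) * \<psi> \<omega> \<partial>M) \<longlonglongrightarrow> (\<integral>\<omega>. G \<omega> * \<psi> \<omega> \<partial>M)"
  proof (rule approx_tendsto[where b="\<lambda>k n. \<integral>\<omega>. f (X n \<omega>) * ps k \<omega> \<partial>M"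
        and L'="\<lambda>k. \<integral>\<omega>. G \<omega> * ps k \<omega> \<partial>M" and e="\<lambda>k. B / K k"])
    show "(\<lambda>k. B / K k) \<longlonglongrightarrow> 0"
      unfolding K_def by (intro tendsto_divide_0[OF tendsto_const] filterlim_at_top_imp_at_infinity[OF filterlim_compose[OF filterlim_real_sequentially filterlim_Suc]])
    fix k
    show "(\<lambda>n. \<integral>\<omega>. f (X n \<omega>) * ps k \<omega> \<partial>M) \<longlonglongrightarrow> (\<integral>\<omega>. G \<omega> * ps k \<omega> \<partial>M)"
    proof -
      have e1: "(\<integral>\<omega>. g \<omega> * ps k \<omega> \<partial>M) = (\<Sum>j\<le>J k. (real j / K k) * (\<integral>\<omega>. g \<omega> * indicator (As k j) \<omega> \<partial>M))"
        if "g \<in> borel_measurable M" "\<And>\<omega>. \<omega> \<in> space M \<Longrightarrow> \<bar>g \<omega>\<bar> \<le> B" for g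
      proof -
        have "(\<integral>\<omega>. g \<omega> * ps k \<omega> \<partial>M) = (\<integral>\<omega>. (\<Sum>j\<le>J k. (real j / K k) * (g \<omega> * indicator (As k j) \<omega>)) \<partial>M)"
          unfolding ps_def by (simp add: sum_distrib_left mult.assoc mult.left_commute)
        also have "\<dots> = (\<Sum>j\<le>J k. (\<integral>\<omega>. (real j / K k) * (g \<omega> * indicator (As k j) \<omega>) \<partial>M))"
          by (rule Bochner_Integration.integral_sum[where f="\<lambda>j \<omega>. real j / K k * (g \<omega> * indicator (As k j) \<omega>)"]) (intro integrable_mult_right i5[OF that As])
        also have "\<dots> = (\<Sum>j\<le>J k. (real j / K k) * (\<integral>\<omega>. g \<omega> * indicator (As k j) \<omega> \<partial>M))"
          by simp
        finally show ?thesis .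
      qed
      have "(\<lambda>n. \<Sum>j\<le>J k. (real j / K k) * (\<integral>\<omega>. f (X n \<omega>) * indicator (As k j) \<omega> \<partial>M))
         \<longlonglongrightarrow> (\<Sum>j\<le>J k. (real j / K k) * (\<integral>\<omega>. G \<omega> * indicator (As k j) \<omega> \<partial>M))"
        unfolding G_def by (intro tendsto_sum tendsto_mult_left R1_ind[OF As f])
      moreover have "(\<integral>\<omega>. f (X n \<omega>) * ps k \<omega> \<partial>M) = (\<Sum>j\<le>J k. (real j / K k) * (\<integral>\<omega>. f (X n \<omega>) * indicator (As k j) \<omega> \<partial>M))" for n
        by (rule e1) (auto intro: fXb)
      ultimately show ?thesis using e1[OF Gm Gb] by simp
    qed
    show "\<bar>(\<integral>\<omega>. f (X n \<omega>) * \<psi> \<omega> \<partial>M) - (\<integral>\<omega>. f (X n \<omega>) * ps k \<omega> \<partial>M)\<bar> \<le> B / K k" for n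
    proof -
      have "(\<integral>\<omega>. f (X n \<omega>) * \<psi> \<omega> \<partial>M) - (\<integral>\<omega>. f (X n \<omega>) * ps k \<omega> \<partial>M)
          = (\<integral>\<omega>. f (X n \<omega>) * \<psi> \<omega> - f (X n \<omega>) * ps k \<omega> \<partial>M)"
        by (rule Bochner_Integration.integral_diff[symmetric, OF i1 i2])
      also have "\<bar>\<dots>\<bar> \<le> (\<integral>\<omega>. B * (1 / K k) \<partial>M)"
      proof (rule abs_bound_int[where g="\<lambda>_. B * (1 / K k)"])
        show "integrable M (\<lambda>\<omega>. f (X n \<omega>) * \<psi> \<omega> - f (X n \<omega>) * ps k \<omega>)" using i1 i2 by auto
        show "\<bar>f (X n \<omega>) * \<psi> \<omega> - f (X n \<omega>) * ps k \<omega>\<bar> \<le> B * (1 / K k)" if "\<omega> \<in> space M" for \<omega>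
          using pb[OF fXb ps_close[OF that]]
          by (simp add: right_diff_distrib)
      qed auto
      finally show ?thesis by (simp add: prob_space)
    qed
    show "\<bar>(\<integral>\<omega>. G \<omega> * ps k \<omega> \<partial>M) - (\<integral>\<omega>. G \<omega> * \<psi> \<omega> \<partial>M)\<bar> \<le> B / K k"
    proof -
      have "(\<integral>\<omega>. G \<omega> * ps k \<omega> \<partial>M) - (\<integral>\<omega>. G \<omega> * \<psi> \<omega> \<partial>M)
          = (\<integral>\<omega>. G \<omega> * ps k \<omega> - G \<omega> * \<psi> \<omega> \<partial>M)"
        by (rule Bochner_Integration.integral_diff[symmetric, OF i4 i3])
      also have "\<bar>\<dots>\<bar> \<le> (\<integral>\<omega>. B * (1 / K k) \<partial>M)"
      proof (rule abs_bound_int[where g="\<lambda>_. B * (1 / K k)"])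
        show "integrable M (\<lambda>\<omega>. G \<omega> * ps k \<omega> - G \<omega> * \<psi> \<omega>)" using i3 i4 by auto
        show "\<bar>G \<omega> * ps k \<omega> - G \<omega> * \<psi> \<omega>\<bar> \<le> B * (1 / K k)" if "\<omega> \<in> space M" for \<omega>
          using pb[OF Gb[OF that] ps_close[OF that]]
          by (simp add: right_diff_distrib abs_minus_commute)
      qed auto
      finally show ?thesis by (simp add: prob_space)
    qed
  qed
  then show ?thesis by (simp add: G_def)
qed

end


lemma quartic_ineq:
  fixes a t :: real
  assumes "0 \<le> a" "0 < t"
  shows "3 * a^2 * t^2 - a^4 \<le> 2 * a * t^3"
proof -
  have "0 \<le> a * (a - t)^2 * (a + 2 * t)" using assms by simp
  then show ?thesis by (simp add: power2_eq_square power3_eq_cube power4_eq_xxxx algebra_simps)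
qed

primrec avN :: "nat \<Rightarrow> (nat \<Rightarrow> real) \<Rightarrow> (real \<Rightarrow> real) \<Rightarrow> real \<Rightarrow> real" where
  "avN 0 a \<Phi> x = \<Phi> x"
| "avN (Suc n) a \<Phi> x = (avN n a \<Phi> (x + a n) + avN n a \<Phi> (x - a n)) / 2"

lemma avN_mono: "(\<And>y. \<Phi> y \<le> \<Psi> y) \<Longrightarrow> avN n a \<Phi> x \<le> avN n a \<Psi> x"
  by (induction n arbitrary: x) (auto intro: add_mono divide_right_mono)

lemma avN_lin: "avN n a (\<lambda>y. c * \<Phi> y + d * \<Psi> y) x = c * avN n a \<Phi> x + d * avN n a \<Psi> x"
  by (induction n arbitrary: x) (simp_all add: field_simps)

lemma avN_sq: "avN n a (\<lambda>y. y^2) x = x^2 + (\<Sum>k<n. (a k)^2)"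
  by (induction n arbitrary: x) (simp_all add: power2_eq_square field_simps)

primrec R4 :: "nat \<Rightarrow> (nat \<Rightarrow> real) \<Rightarrow> real" where
  "R4 0 a = 0"
| "R4 (Suc n) a = R4 n a + 6 * (\<Sum>k<n. (a k)^2) * (a n)^2 + (a n)^4"

lemma avN_4: "avN n a (\<lambda>y. y^4) x = x^4 + 6 * x^2 * (\<Sum>k<n. (a k)^2) + R4 n a"
  by (induction n arbitrary: x) (simp_all add: power2_eq_square power4_eq_xxxx field_simps)

lemma R4_le: "R4 n a \<le> 3 * (\<Sum>k<n. (a k)^2)^2"
proof (induction n)
  case (Suc n)
  let ?Q = "\<Sum>k<n. (a k)^2"
  have "R4 (Suc n) a \<le> 3 * ?Q^2 + 6 * ?Q * (a n)^2 + (a n)^4" using Suc by simp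
  also have "\<dots> \<le> 3 * (?Q + (a n)^2)^2"
  proof -
    have h: "0 \<le> (a n * a n) * (a n * a n)" by simp
    then show ?thesis by (simp add: power2_eq_square power4_eq_xxxx algebra_simps)
  qed
  finally show ?case by simp
qed simp

lemma avN_nonneg: "(\<And>y. 0 \<le> \<Phi> y) \<Longrightarrow> 0 \<le> avN n a \<Phi> x"
  by (induction n arbitrary: x) auto

lemma khintchine: "sqrt (\<Sum>k<n. (a k)^2) / sqrt 3 \<le> avN n a abs 0"
proof (cases "(\<Sum>k<n. (a k)^2) = 0")
  case True then show ?thesis by (simp add: avN_nonneg)
next
  case False
  define Q where "Q = (\<Sum>k<n. (a k)^2)"
  have Q: "Q > 0" using False unfolding Q_def by (simp add: less_le sum_nonneg)
  define t where "t = sqrt (3 * Q)"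
  have t: "t > 0" using Q by (simp add: t_def)
  have pt: "(3 / (2 * t)) * y^2 + (- 1 / (2 * t^3)) * y^4 \<le> \<bar>y\<bar>" for y
  proof -
    have "3 * \<bar>y\<bar>^2 * t^2 - \<bar>y\<bar>^4 \<le> 2 * \<bar>y\<bar> * t^3" by (rule quartic_ineq) (use t in auto)
    then have "3 * y^2 * t^2 - y^4 \<le> 2 * \<bar>y\<bar> * t^3" by (simp add: power2_abs power4_eq_xxxx)
    then show ?thesis using t by (simp add: field_simps power2_eq_square power3_eq_cube power4_eq_xxxx)
  qed
  have "avN n a (\<lambda>y. (3 / (2 * t)) * y^2 + (- 1 / (2 * t^3)) * y^4) 0 \<le> avN n a abs 0"
    by (rule avN_mono[OF pt])
  moreover have "avN n a (\<lambda>y. (3 / (2 * t)) * y^2 + (- 1 / (2 * t^3)) * y^4) 0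
      = (3 / (2 * t)) * Q + (- 1 / (2 * t^3)) * R4 n a"
    by (subst avN_lin) (simp only: avN_sq avN_4 Q_def, simp)
  ultimately have "(3 / (2 * t)) * Q + (- 1 / (2 * t^3)) * R4 n a \<le> avN n a abs 0"
    by simp
  moreover have "(- 1 / (2 * t^3)) * (3 * Q^2) \<le> (- 1 / (2 * t^3)) * R4 n a"
    using R4_le[of n a] t by (intro mult_left_mono_neg) (auto simp: Q_def)
  ultimately have "(3 / (2 * t)) * Q - 3 * Q^2 / (2 * t^3) \<le> avN n a abs 0" by simp
  moreover have "(3 / (2 * t)) * Q - 3 * Q^2 / (2 * t^3) = sqrt Q / sqrt 3"
  proof -
    have t2: "t^2 = 3 * Q" using Q by (simp add: t_def)
    have "t^3 = t * (3 * Q)" using t2 by (simp add: power3_eq_cube power2_eq_square)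
    then have "(3 / (2 * t)) * Q - 3 * Q^2 / (2 * t^3) = Q / t"
      using t Q by (simp add: field_simps power2_eq_square)
    also have "\<dots> = sqrt Q / sqrt 3" using Q
      by (simp add: t_def real_sqrt_mult field_simps)
    finally show ?thesis .
  qed
  ultimately show ?thesis by (simp add: Q_def)
qed

lemma avN_integrable:
  fixes Y :: "nat \<Rightarrow> 'a \<Rightarrow> real"
  assumes "\<And>k. integrable M (Y k)" "integrable M x"
  shows "integrable M (\<lambda>\<omega>. avN n (\<lambda>k. Y k \<omega>) abs (x \<omega>))"
  using assms(2)
proof (induction n arbitrary: x)
  case 0 then show ?case by simp
next
  case (Suc n)
  have "integrable M (\<lambda>\<omega>. avN n (\<lambda>k. Y k \<omega>) abs (x \<omega> + Y n \<omega>))"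
    using Suc.IH[of "\<lambda>\<omega>. x \<omega> + Y n \<omega>"] Suc.prems assms(1) by auto
  moreover have "integrable M (\<lambda>\<omega>. avN n (\<lambda>k. Y k \<omega>) abs (x \<omega> - Y n \<omega>))"
    using Suc.IH[of "\<lambda>\<omega>. x \<omega> - Y n \<omega>"] Suc.prems assms(1) by auto
  ultimately show ?case by simp
qed

lemma sign_select:
  fixes Y :: "nat \<Rightarrow> 'a \<Rightarrow> real"
  assumes Yi: "\<And>k. integrable M (Y k)" and xi: "integrable M x"
  shows "\<exists>\<epsilon>. (\<forall>k. \<epsilon> k = 1 \<or> \<epsilon> k = -1) \<and>
     (\<integral>\<omega>. avN n (\<lambda>k. Y k \<omega>) abs (x \<omega>) \<partial>M) \<le> (\<integral>\<omega>. \<bar>x \<omega> + (\<Sum>k<n. \<epsilon> k * Y k \<omega>)\<bar> \<partial>M)"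
  using xi
proof (induction n arbitrary: x)
  case 0 then show ?case by (intro exI[of _ "\<lambda>_. 1"]) simp
next
  case (Suc n)
  define x1 where "x1 \<omega> = x \<omega> + Y n \<omega>" for \<omega>
  define x2 where "x2 \<omega> = x \<omega> - Y n \<omega>" for \<omega>
  have x1i: "integrable M x1" unfolding x1_def using Suc.prems Yi by auto
  have x2i: "integrable M x2" unfolding x2_def using Suc.prems Yi by auto
  obtain e1 where e1: "\<forall>k. e1 k = 1 \<or> e1 k = -1"
    "(\<integral>\<omega>. avN n (\<lambda>k. Y k \<omega>) abs (x1 \<omega>) \<partial>M) \<le> (\<integral>\<omega>. \<bar>x1 \<omega> + (\<Sum>k<n. e1 k * Y k \<omega>)\<bar> \<partial>M)"
    using Suc.IH[OF x1i] by blast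
  obtain e2 where e2: "\<forall>k. e2 k = 1 \<or> e2 k = -1"
    "(\<integral>\<omega>. avN n (\<lambda>k. Y k \<omega>) abs (x2 \<omega>) \<partial>M) \<le> (\<integral>\<omega>. \<bar>x2 \<omega> + (\<Sum>k<n. e2 k * Y k \<omega>)\<bar> \<partial>M)"
    using Suc.IH[OF x2i] by blast
  let ?I1 = "\<integral>\<omega>. avN n (\<lambda>k. Y k \<omega>) abs (x1 \<omega>) \<partial>M"
  let ?I2 = "\<integral>\<omega>. avN n (\<lambda>k. Y k \<omega>) abs (x2 \<omega>) \<partial>M"
  have eq: "(\<integral>\<omega>. avN (Suc n) (\<lambda>k. Y k \<omega>) abs (x \<omega>) \<partial>M) = (?I1 + ?I2) / 2"
  proof -
    have "(\<integral>\<omega>. avN (Suc n) (\<lambda>k. Y k \<omega>) abs (x \<omega>) \<partial>M)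
       = (\<integral>\<omega>. (avN n (\<lambda>k. Y k \<omega>) abs (x1 \<omega>) + avN n (\<lambda>k. Y k \<omega>) abs (x2 \<omega>)) / 2 \<partial>M)"
      by (simp add: x1_def x2_def)
    also have "\<dots> = (?I1 + ?I2) / 2"
      using avN_integrable[OF Yi x1i, of n] avN_integrable[OF Yi x2i, of n] by simp
    finally show ?thesis .
  qed
  show ?case
  proof (cases "?I2 \<le> ?I1")
    case True
    define e where "e = e1(n := 1)"
    have "(\<Sum>k<n. e k * Y k \<omega>) = (\<Sum>k<n. e1 k * Y k \<omega>)" for \<omega>
      by (intro sum.cong) (auto simp: e_def)
    then have "(\<integral>\<omega>. \<bar>x \<omega> + (\<Sum>k<Suc n. e k * Y k \<omega>)\<bar> \<partial>M) = (\<integral>\<omega>. \<bar>x1 \<omega> + (\<Sum>k<n. e1 k * Y k \<omega>)\<bar> \<partial>M)"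
      by (simp add: x1_def e_def algebra_simps)
    moreover have "\<forall>k. e k = 1 \<or> e k = -1" using e1(1) by (simp add: e_def)
    ultimately show ?thesis using e1(2) True eq by (intro exI[of _ e]) auto
  next
    case False
    define e where "e = e2(n := -1)"
    have "(\<Sum>k<n. e k * Y k \<omega>) = (\<Sum>k<n. e2 k * Y k \<omega>)" for \<omega>
      by (intro sum.cong) (auto simp: e_def)
    then have "(\<integral>\<omega>. \<bar>x \<omega> + (\<Sum>k<Suc n. e k * Y k \<omega>)\<bar> \<partial>M) = (\<integral>\<omega>. \<bar>x2 \<omega> + (\<Sum>k<n. e2 k * Y k \<omega>)\<bar> \<partial>M)"
      by (simp add: x2_def e_def algebra_simps)
    moreover have "\<forall>k. e k = 1 \<or> e k = -1" using e2(1) by (simp add: e_def)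
    ultimately show ?thesis using e2(2) False eq by (intro exI[of _ e]) auto
  qed
qed

lemma sum_sq_le_sq_sum: "(\<Sum>k<n. (a k)^2) \<le> (\<Sum>k<n. \<bar>a k\<bar>)^2" for a :: "nat \<Rightarrow> real"
proof (induction n)
  case (Suc n)
  let ?S = "\<Sum>k<n. \<bar>a k\<bar>"
  have h: "0 \<le> 2 * ?S * \<bar>a n\<bar>" by (simp add: sum_nonneg)
  have e1: "(\<Sum>k<Suc n. (a k)^2) = (\<Sum>k<n. (a k)^2) + (a n)^2" by simp
  have e2: "(\<Sum>k<Suc n. \<bar>a k\<bar>)^2 = ?S^2 + 2 * ?S * \<bar>a n\<bar> + (a n)^2"
    by (simp add: power2_eq_square algebra_simps)
  show ?case unfolding e1 e2 using Suc h by linarith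
qed simp

lemma sqrt_sum_sq_le: "sqrt (\<Sum>k<n. (a k)^2) \<le> (\<Sum>k<n. \<bar>a k\<bar>)" for a :: "nat \<Rightarrow> real"
  using real_sqrt_le_mono[OF sum_sq_le_sq_sum[where n=n and a=a]] by (simp add: sum_nonneg)


lemma sqrt_lower:
  fixes z S :: real
  assumes z: "0 \<le> z" and S: "S > 0"
  shows "3 * z / (2 * sqrt S) - z^2 / (2 * S * sqrt S) \<le> sqrt z"
proof -
  have q: "3 * (sqrt z)^2 * (sqrt S)^2 - (sqrt z)^4 \<le> 2 * sqrt z * (sqrt S)^3"
    by (rule quartic_ineq) (use z S in auto)
  have e1: "(sqrt z)^2 = z" "(sqrt S)^2 = S" using z S by auto
  have e2: "(sqrt z)^4 = z^2" using z by (simp add: power4_eq_xxxx power2_eq_square)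
  have e3: "(sqrt S)^3 = S * sqrt S" using e1(2) by (simp add: power3_eq_cube power2_eq_square)
  have q2: "3 * z * S - z^2 \<le> 2 * sqrt z * (S * sqrt S)" using q unfolding e1 e2 e3 by simp
  have pos: "0 < 2 * S * sqrt S" using S by simp
  have "3 * z / (2 * sqrt S) = (3 * z * S) / (2 * S * sqrt S)" using S by simp
  then have "3 * z / (2 * sqrt S) - z^2 / (2 * S * sqrt S) = (3 * z * S - z^2) / (2 * S * sqrt S)"
    by (simp add: diff_divide_distrib)
  also have "\<dots> \<le> (2 * sqrt z * (S * sqrt S)) / (2 * S * sqrt S)"
    by (rule divide_right_mono[OF q2]) (use pos in simp)
  also have "\<dots> = sqrt z" using S by simp
  finally show ?thesis .
qed


lemma select_seq:
  fixes P :: "nat \<Rightarrow> bool" and Q :: "nat \<Rightarrow> nat \<Rightarrow> bool"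
  assumes "eventually P sequentially" "\<And>i. eventually (Q i) sequentially"
  shows "\<exists>s :: nat \<Rightarrow> nat. strict_mono s \<and> (\<forall>k. P (s k)) \<and> (\<forall>i j. i < j \<longrightarrow> Q (s i) (s j))"
proof -
  obtain N0 where N0: "\<And>n. n \<ge> N0 \<Longrightarrow> P n" using assms(1) unfolding eventually_sequentially by auto
  have "\<forall>i. \<exists>N. \<forall>n\<ge>N. Q i n" using assms(2) unfolding eventually_sequentially by auto
  then obtain Nq where Nq: "\<And>i n. n \<ge> Nq i \<Longrightarrow> Q i n" by metis
  define s where "s = rec_nat N0 (\<lambda>_ sk. max (Suc sk) (Max (Nq ` {..sk})))"
  have s0: "s 0 = N0" unfolding s_def by simp
  have sS: "s (Suc k) = max (Suc (s k)) (Max (Nq ` {..s k}))" for k unfolding s_def by simp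
  have sm: "strict_mono s"
  proof (rule strict_monoI_Suc)
    fix n show "s n < s (Suc n)" unfolding sS by (rule less_le_trans[OF lessI max.cobounded1])
  qed
  have sN: "s k \<ge> N0" for k using strict_mono_leD[OF sm, of 0 k] by (simp add: s0)
  have sQ: "Q (s i) (s j)" if "i < j" for i j
  proof -
    have "s j \<ge> s (Suc i)" using strict_mono_leD[OF sm] that by simp
    moreover have "Max (Nq ` {..s i}) \<ge> Nq (s i)" by (rule Max_ge) auto
    moreover have "s (Suc i) \<ge> Max (Nq ` {..s i})" by (simp only: sS)
    ultimately show ?thesis by (intro Nq) linarith
  qed
  show ?thesis
  proof (intro exI[where x=s] conjI allI impI)
    show "strict_mono s" by (rule sm)
    show "P (s k)" for k by (rule N0[OF sN])
    show "Q (s i) (s j)" if "i < j" for i j by (rule sQ[OF that])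
  qed
qed


context detsetup begin

lemma bint: "h \<in> borel_measurable M \<Longrightarrow> (\<And>\<omega>. \<omega> \<in> space M \<Longrightarrow> \<bar>h \<omega>\<bar> \<le> D) \<Longrightarrow> integrable M h"
  for h :: "'a \<Rightarrow> real" and D :: real
  by (rule integrable_const_bound[where B=D]) (auto intro!: AE_I2)

lemma bint2:
  fixes f g :: "'a \<Rightarrow> real" and A B :: real
  assumes fm: "f \<in> borel_measurable M" and gm: "g \<in> borel_measurable M"
    and fA: "\<And>\<omega>. \<omega> \<in> space M \<Longrightarrow> \<bar>f \<omega>\<bar> \<le> A" and gB: "\<And>\<omega>. \<omega> \<in> space M \<Longrightarrow> \<bar>g \<omega>\<bar> \<le> B"
  shows "integrable M (\<lambda>\<omega>. f \<omega> * g \<omega>)"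
proof (rule bint[where D="A * B"])
  show "(\<lambda>\<omega>. f \<omega> * g \<omega>) \<in> borel_measurable M" using fm gm by simp
  fix \<omega> assume \<omega>: "\<omega> \<in> space M"
  have "0 \<le> A" using fA[OF \<omega>] by linarith
  then show "\<bar>f \<omega> * g \<omega>\<bar> \<le> A * B"
    unfolding abs_mult by (intro mult_mono fA[OF \<omega>] gB[OF \<omega>]) auto
qed

lemma core:
  fixes T \<epsilon> :: real and n0 :: nat
  assumes T: "T > 0" and eps: "\<epsilon> > 0"
  defines "g \<equiv> \<lambda>\<omega>. \<integral>y. min (y^2) T \<partial>\<mu> \<omega>"
  shows "\<exists>s::nat\<Rightarrow>nat. strict_mono s \<and> (\<forall>k. s k \<ge> n0) \<and>
     (\<forall>N\<ge>1. sqrt (real N) * ((\<integral>\<omega>. g \<omega> / sqrt (g \<omega> + 1) \<partial>M) - 5/2 * \<epsilon> - T^2 / (2 * real N))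
        \<le> (\<integral>\<omega>. sqrt (\<Sum>k<N. min ((X (s k) \<omega>)^2) T) \<partial>M))"
proof -
  define w where "w x = min (x^2) T" for x :: real
  have wc: "isCont w x" for x unfolding w_def by (intro continuous_intros)
  have wm[measurable]: "w \<in> borel_measurable borel" unfolding w_def by measurable
  have w0: "0 \<le> w x" and wT: "w x \<le> T" for x using T by (auto simp: w_def)
  have wb: "\<bar>w x\<bar> \<le> T" for x using w0 wT by simp
  have geq: "g = (\<lambda>\<omega>. \<integral>y. w y \<partial>\<mu> \<omega>)" by (simp add: g_def w_def)
  have gm[measurable]: "g \<in> borel_measurable M" unfolding geq by (rule G_meas[OF wm])
  have g0: "0 \<le> g \<omega>" if "\<omega> \<in> space M" for \<omega>
    unfolding geq by (rule integral_nonneg_AE) (simp add: w0)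
  have gT: "g \<omega> \<le> T" if "\<omega> \<in> space M" for \<omega>
    using G_bound[OF that wm wb] unfolding geq by simp
  define p1 where "p1 \<omega> = 1 / sqrt (g \<omega> + 1)" for \<omega>
  define p3 where "p3 \<omega> = 1 / ((g \<omega> + 1) * sqrt (g \<omega> + 1))" for \<omega>
  have p1m[measurable]: "p1 \<in> borel_measurable M" unfolding p1_def by measurable
  have p3m[measurable]: "p3 \<in> borel_measurable M" unfolding p3_def by measurable
  have p1b: "0 \<le> p1 \<omega> \<and> p1 \<omega> \<le> 1" if "\<omega> \<in> space M" for \<omega>
    using g0[OF that] by (auto simp: p1_def)
  have p3b: "0 \<le> p3 \<omega> \<and> p3 \<omega> \<le> 1" if "\<omega> \<in> space M" for \<omega>
  proof -
    have "1 \<le> g \<omega> + 1" "1 \<le> sqrt (g \<omega> + 1)" using g0[OF that] by auto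
    then have "1 * 1 \<le> (g \<omega> + 1) * sqrt (g \<omega> + 1)" by (intro mult_mono) auto
    then show ?thesis using g0[OF that] by (auto simp: p3_def)
  qed
  define a where "a = (\<integral>\<omega>. g \<omega> * p1 \<omega> \<partial>M)"
  define b where "b = (\<integral>\<omega>. g \<omega> * (g \<omega> * p3 \<omega>) \<partial>M)"
  have a_eq: "a = (\<integral>\<omega>. g \<omega> / sqrt (g \<omega> + 1) \<partial>M)" unfolding a_def p1_def by simp
  have gb: "\<bar>g \<omega>\<bar> \<le> T" if "\<omega> \<in> space M" for \<omega> using g0[OF that] gT[OF that] by simp
  have p1a: "\<bar>p1 \<omega>\<bar> \<le> 1" if "\<omega> \<in> space M" for \<omega> using p1b[OF that] by simp
  have p3a: "\<bar>p3 \<omega>\<bar> \<le> 1" if "\<omega> \<in> space M" for \<omega> using p3b[OF that] by simp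
  have Wa: "\<bar>w (X n \<omega>)\<bar> \<le> T" for n \<omega> by (rule wb)
  have prodb: "\<bar>x * y\<bar> \<le> A * B" if "\<bar>x\<bar> \<le> A" "\<bar>y\<bar> \<le> B" for x y A B :: real
  proof -
    have "0 \<le> A" using that(1) by linarith
    then show ?thesis unfolding abs_mult using that by (intro mult_mono) auto
  qed
  have gp3b: "\<bar>g \<omega> * p3 \<omega>\<bar> \<le> T" if "\<omega> \<in> space M" for \<omega>
    using prodb[OF gb[OF that] p3a[OF that]] by simp
  have Wp3b: "\<bar>w (X i \<omega>) * p3 \<omega>\<bar> \<le> T" if "\<omega> \<in> space M" for i \<omega>
    using prodb[OF Wa p3a[OF that]] by simp
  have gw: "(\<integral>y. w y \<partial>\<mu> \<omega>) = g \<omega>" for \<omega> by (simp add: geq)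
  have iA: "integrable M (\<lambda>\<omega>. g \<omega> * p1 \<omega>)" by (rule bint2[OF gm p1m gb p1a])
  have iB: "integrable M (\<lambda>\<omega>. g \<omega> * (g \<omega> * p3 \<omega>))" by (rule bint2[OF gm _ gb gp3b]) measurable
  have ab: "b \<le> a"
    unfolding a_def b_def
  proof (rule integral_mono[OF iB iA])
    fix \<omega> assume \<omega>: "\<omega> \<in> space M"
    have "g \<omega> * p3 \<omega> = (g \<omega> / (g \<omega> + 1)) * p1 \<omega>"
      using g0[OF \<omega>] by (simp add: p1_def p3_def field_simps)
    moreover have "g \<omega> / (g \<omega> + 1) \<le> 1" using g0[OF \<omega>] by simp
    moreover have "0 \<le> g \<omega> * p1 \<omega>" using g0[OF \<omega>] p1b[OF \<omega>] by simp
    ultimately show "g \<omega> * (g \<omega> * p3 \<omega>) \<le> g \<omega> * p1 \<omega>"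
      using mult_right_mono[of "g \<omega> / (g \<omega> + 1)" 1 "g \<omega> * p1 \<omega>"] by (simp add: ac_simps)
  qed
  have b0: "0 \<le> b" unfolding b_def
  proof (rule integral_nonneg_AE, rule AE_I2)
    fix \<omega> assume \<omega>: "\<omega> \<in> space M"
    show "0 \<le> g \<omega> * (g \<omega> * p3 \<omega>)" using g0[OF \<omega>] p3b[OF \<omega>] by simp
  qed
  define E1 where "E1 n = (\<integral>\<omega>. w (X n \<omega>) * p1 \<omega> \<partial>M)" for n
  define E2 where "E2 n = (\<integral>\<omega>. w (X n \<omega>) * (g \<omega> * p3 \<omega>) \<partial>M)" for n
  define E3 where "E3 i n = (\<integral>\<omega>. w (X n \<omega>) * (w (X i \<omega>) * p3 \<omega>) \<partial>M)" for i n
  define L3 where "L3 i = (\<integral>\<omega>. g \<omega> * (w (X i \<omega>) * p3 \<omega>) \<partial>M)" for i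
  have c1: "E1 \<longlonglongrightarrow> a"
    using R1[OF p1m p1b wc wb] unfolding E1_def a_def gw .
  have c2: "E2 \<longlonglongrightarrow> b"
  proof -
    have "\<omega> \<in> space M \<Longrightarrow> 0 \<le> g \<omega> * p3 \<omega> \<and> g \<omega> * p3 \<omega> \<le> T" for \<omega>
      using gp3b[of \<omega>] g0[of \<omega>] p3b[of \<omega>] by auto
    from R1[OF _ this wc wb] show ?thesis unfolding E2_def b_def gw by simp
  qed
  have c3: "E3 i \<longlonglongrightarrow> L3 i" for i
  proof -
    have "\<omega> \<in> space M \<Longrightarrow> 0 \<le> w (X i \<omega>) * p3 \<omega> \<and> w (X i \<omega>) * p3 \<omega> \<le> T" for \<omega>
      using Wp3b[of \<omega> i] w0[of "X i \<omega>"] p3b[of \<omega>] by auto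
    from R1[OF _ this wc wb] show ?thesis unfolding E3_def L3_def gw by simp
  qed
  have L3E2: "L3 i = E2 i" for i unfolding L3_def E2_def by (simp add: ac_simps)
  define P where "P = (\<lambda>n. n \<ge> n0 \<and> a - \<epsilon> < E1 n \<and> E2 n < b + \<epsilon>)"
  define Q where "Q = (\<lambda>i n. E3 i n < L3 i + \<epsilon>)"
  have evP: "eventually P sequentially"
  proof -
    have e2: "eventually (\<lambda>n. a - \<epsilon> < E1 n) sequentially" using order_tendstoD(1)[OF c1, of "a - \<epsilon>"] eps by simp
    have e3: "eventually (\<lambda>n. E2 n < b + \<epsilon>) sequentially" using order_tendstoD(2)[OF c2, of "b + \<epsilon>"] eps by simp
    show ?thesis unfolding P_def using eventually_conj[OF eventually_ge_at_top[of n0] eventually_conj[OF e2 e3]] .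
  qed
  have evQ: "eventually (Q i) sequentially" for i
    unfolding Q_def using order_tendstoD(2)[OF c3[of i], of "L3 i + \<epsilon>"] eps by simp
  obtain s :: "nat \<Rightarrow> nat" where s: "strict_mono s \<and> (\<forall>k. P (s k)) \<and> (\<forall>i j. i < j \<longrightarrow> Q (s i) (s j))"
    using select_seq[where P=P and Q=Q, OF evP evQ] by (elim exE) (rule that)
  have sm: "strict_mono s" and sP: "\<And>k. P (s k)" and sQ: "\<And>i j. i < j \<Longrightarrow> Q (s i) (s j)"
    using s by auto
  show ?thesis
  proof (intro exI[where x=s] conjI allI impI)
    show "strict_mono s" by (rule sm)
    show "s k \<ge> n0" for k using sP[of k] by (simp add: P_def)
    fix N :: nat assume N: "N \<ge> 1"
    define Z where "Z \<omega> = (\<Sum>k<N. w (X (s k) \<omega>))" for \<omega>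
    have Zm[measurable]: "Z \<in> borel_measurable M" unfolding Z_def by measurable
    have Z0: "0 \<le> Z \<omega>" for \<omega> unfolding Z_def by (rule sum_nonneg) (rule w0)
    have ZT: "Z \<omega> \<le> real N * T" for \<omega>
    proof -
      have "Z \<omega> \<le> (\<Sum>k<N. T)" unfolding Z_def by (rule sum_mono) (rule wT)
      then show ?thesis by simp
    qed
    have Za: "\<bar>Z \<omega>\<bar> \<le> real N * T" for \<omega> using Z0[of \<omega>] ZT[of \<omega>] by simp
    have Z2a: "\<bar>(Z \<omega>)^2\<bar> \<le> (real N * T)^2" for \<omega>
      using Z0[of \<omega>] ZT[of \<omega>] by (simp add: power_mono)
    define r where "r = sqrt (real N)"
    have r: "r > 0" using N by (simp add: r_def)
    have rN: "r * r = real N" using N by (simp add: r_def)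
    define k1 where "k1 = 3 / (2 * r)"
    define k2 where "k2 = 1 / (2 * real N * r)"
    have pw: "k1 * (Z \<omega> * p1 \<omega>) - k2 * ((Z \<omega>)^2 * p3 \<omega>) \<le> sqrt (Z \<omega>)" if \<omega>: "\<omega> \<in> space M" for \<omega>
    proof -
      define S where "S = real N * (g \<omega> + 1)"
      have gp: "g \<omega> + 1 > 0" using g0[OF \<omega>] by simp
      have S: "S > 0" using gp N by (simp add: S_def)
      have sS: "sqrt S = r * sqrt (g \<omega> + 1)" by (simp add: S_def r_def real_sqrt_mult)
      have "3 * Z \<omega> / (2 * sqrt S) = k1 * (Z \<omega> * p1 \<omega>)"
        unfolding sS k1_def p1_def by simp
      moreover have "(Z \<omega>)^2 / (2 * S * sqrt S) = k2 * ((Z \<omega>)^2 * p3 \<omega>)"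
      proof -
        have "2 * S * sqrt S = 2 * real N * r * ((g \<omega> + 1) * sqrt (g \<omega> + 1))"
          unfolding sS by (simp add: S_def ac_simps)
        then show ?thesis unfolding k2_def p3_def by simp
      qed
      ultimately show ?thesis using sqrt_lower[OF Z0[of \<omega>] S] by simp
    qed
    have iZ1: "integrable M (\<lambda>\<omega>. Z \<omega> * p1 \<omega>)" by (rule bint2[OF Zm p1m Za p1a])
    have iZ2: "integrable M (\<lambda>\<omega>. (Z \<omega>)^2 * p3 \<omega>)" by (rule bint2[OF _ p3m Z2a p3a]) measurable
    have isq: "integrable M (\<lambda>\<omega>. sqrt (Z \<omega>))"
    proof (rule bint[where D="sqrt (real N * T)"])
      show "(\<lambda>\<omega>. sqrt (Z \<omega>)) \<in> borel_measurable M" by measurable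
      show "\<bar>sqrt (Z \<omega>)\<bar> \<le> sqrt (real N * T)" for \<omega> using Z0[of \<omega>] ZT[of \<omega>] by simp
    qed
    have I1: "k1 * (\<integral>\<omega>. Z \<omega> * p1 \<omega> \<partial>M) - k2 * (\<integral>\<omega>. (Z \<omega>)^2 * p3 \<omega> \<partial>M) \<le> (\<integral>\<omega>. sqrt (Z \<omega>) \<partial>M)"
    proof -
      have "k1 * (\<integral>\<omega>. Z \<omega> * p1 \<omega> \<partial>M) - k2 * (\<integral>\<omega>. (Z \<omega>)^2 * p3 \<omega> \<partial>M)
          = (\<integral>\<omega>. k1 * (Z \<omega> * p1 \<omega>) - k2 * ((Z \<omega>)^2 * p3 \<omega>) \<partial>M)"
        using iZ1 iZ2 by simp
      also have "\<dots> \<le> (\<integral>\<omega>. sqrt (Z \<omega>) \<partial>M)"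
        by (rule integral_mono) (use iZ1 iZ2 isq pw in auto)
      finally show ?thesis .
    qed
    have iW1: "integrable M (\<lambda>\<omega>. w (X n \<omega>) * p1 \<omega>)" for n by (rule bint2[OF _ p1m Wa p1a]) measurable
    have EZ1: "(\<integral>\<omega>. Z \<omega> * p1 \<omega> \<partial>M) \<ge> real N * (a - \<epsilon>)"
    proof -
      have "(\<integral>\<omega>. Z \<omega> * p1 \<omega> \<partial>M) = (\<integral>\<omega>. (\<Sum>k<N. w (X (s k) \<omega>) * p1 \<omega>) \<partial>M)"
        unfolding Z_def by (simp add: sum_distrib_right)
      also have "\<dots> = (\<Sum>k<N. E1 (s k))"
        unfolding E1_def by (rule Bochner_Integration.integral_sum[where f="\<lambda>k \<omega>. w (X (s k) \<omega>) * p1 \<omega>"]) (rule iW1)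
      also have "\<dots> \<ge> (\<Sum>k<N. a - \<epsilon>)"
        by (rule sum_mono) (use sP in \<open>auto simp: P_def less_imp_le\<close>)
      finally show ?thesis by simp
    qed
    define t where "t i j = (\<integral>\<omega>. w (X (s i) \<omega>) * (w (X (s j) \<omega>) * p3 \<omega>) \<partial>M)" for i j
    have iW2: "integrable M (\<lambda>\<omega>. w (X i \<omega>) * (w (X j \<omega>) * p3 \<omega>))" for i j
      by (rule bint2[OF _ _ Wa Wp3b]) measurable
    have EZ2: "(\<integral>\<omega>. (Z \<omega>)^2 * p3 \<omega> \<partial>M) = (\<Sum>i<N. \<Sum>j<N. t i j)"
    proof -
      have "(\<integral>\<omega>. (Z \<omega>)^2 * p3 \<omega> \<partial>M) = (\<integral>\<omega>. (\<Sum>i<N. \<Sum>j<N. w (X (s i) \<omega>) * (w (X (s j) \<omega>) * p3 \<omega>)) \<partial>M)"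
        unfolding Z_def power2_eq_square sum_product by (simp add: sum_distrib_right mult.assoc)
      also have "\<dots> = (\<Sum>i<N. (\<integral>\<omega>. (\<Sum>j<N. w (X (s i) \<omega>) * (w (X (s j) \<omega>) * p3 \<omega>)) \<partial>M))"
        by (rule Bochner_Integration.integral_sum[where f="\<lambda>i \<omega>. \<Sum>j<N. w (X (s i) \<omega>) * (w (X (s j) \<omega>) * p3 \<omega>)"])
           (intro Bochner_Integration.integrable_sum iW2)
      also have "\<dots> = (\<Sum>i<N. \<Sum>j<N. t i j)"
        unfolding t_def
        by (intro sum.cong refl Bochner_Integration.integral_sum[where f="\<lambda>j \<omega>. w (X (s _) \<omega>) * (w (X (s j) \<omega>) * p3 \<omega>)"] iW2)
      finally show ?thesis .
    qed
    have tb: "t i j \<le> (if i = j then T^2 else 0) + (b + 2 * \<epsilon>)" for i j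
    proof (cases "i = j")
      case True
      have "t i j \<le> (\<integral>\<omega>. T * T \<partial>M)"
        unfolding t_def
      proof (rule integral_mono[OF iW2])
        show "integrable M (\<lambda>\<omega>. T * T)" by simp
        fix \<omega> assume \<omega>: "\<omega> \<in> space M"
        show "w (X (s i) \<omega>) * (w (X (s j) \<omega>) * p3 \<omega>) \<le> T * T"
          using prodb[OF Wa[of "s i" \<omega>] Wp3b[OF \<omega>, of "s j"]] by simp
      qed
      then show ?thesis using True b0 eps by (simp add: prob_space power2_eq_square)
    next
      case False
      have key: "t i j < b + 2 * \<epsilon>" if "i < j" for i j
      proof -
        have "t i j = E3 (s i) (s j)" unfolding t_def E3_def by (simp add: ac_simps)
        also have "\<dots> < L3 (s i) + \<epsilon>" using sQ[OF that] by (simp add: Q_def)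
        also have "\<dots> < b + 2 * \<epsilon>" using sP[of i] by (simp add: P_def L3E2)
        finally show ?thesis .
      qed
      have tsym: "t i j = t j i" unfolding t_def by (simp add: ac_simps)
      show ?thesis
      proof (cases "i < j")
        case True then show ?thesis using key[OF True] False by simp
      next
        case False2: False
        then have "j < i" using False by simp
        then show ?thesis using key[of j i] tsym False by simp
      qed
    qed
    have EZ2b: "(\<integral>\<omega>. (Z \<omega>)^2 * p3 \<omega> \<partial>M) \<le> real N * T^2 + real N * real N * (b + 2 * \<epsilon>)"
    proof -
      have "(\<Sum>i<N. \<Sum>j<N. t i j) \<le> (\<Sum>i<N. \<Sum>j<N. (if i = j then T^2 else 0) + (b + 2 * \<epsilon>))"
        by (intro sum_mono tb)
      also have "\<dots> = (\<Sum>i<N. T^2 + real N * (b + 2 * \<epsilon>))"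
        by (intro sum.cong refl) (simp add: sum.distrib)
      also have "\<dots> = real N * T^2 + real N * real N * (b + 2 * \<epsilon>)" by (simp add: algebra_simps)
      finally show ?thesis using EZ2 by simp
    qed
    have k1p: "k1 > 0" using r by (simp add: k1_def)
    have k2p: "k2 > 0" using r N by (simp add: k2_def)
    have A: "k1 * (real N * (a - \<epsilon>)) \<le> k1 * (\<integral>\<omega>. Z \<omega> * p1 \<omega> \<partial>M)"
      using EZ1 k1p by (intro mult_left_mono) auto
    have B: "k2 * (\<integral>\<omega>. (Z \<omega>)^2 * p3 \<omega> \<partial>M) \<le> k2 * (real N * T^2 + real N * real N * (b + 2 * \<epsilon>))"
      using EZ2b k2p by (intro mult_left_mono) auto
    have A': "k1 * (real N * (a - \<epsilon>)) = 3 / 2 * (r * a) - 3 / 2 * (r * \<epsilon>)"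
      unfolding k1_def rN[symmetric] using r by (simp add: algebra_simps)
    have B': "k2 * (real N * T^2 + real N * real N * (b + 2 * \<epsilon>)) = T^2 / (2 * r) + (r * b) / 2 + r * \<epsilon>"
      unfolding k2_def rN[symmetric] using r by (simp add: field_simps)
    have C: "sqrt (real N) * (a - 5/2 * \<epsilon> - T^2 / (2 * real N)) = r * a - 5/2 * (r * \<epsilon>) - T^2 / (2 * r)"
      unfolding r_def[symmetric] rN[symmetric] using r by (simp add: field_simps)
    have D: "r * b \<le> r * a" using ab r by simp
    have "sqrt (real N) * (a - 5/2 * \<epsilon> - T^2 / (2 * real N)) \<le> (\<integral>\<omega>. sqrt (Z \<omega>) \<partial>M)"
      using A B A' B' C D I1 by linarith
    then show "sqrt (real N) * ((\<integral>\<omega>. g \<omega> / sqrt (g \<omega> + 1) \<partial>M) - 5/2 * \<epsilon> - T^2 / (2 * real N))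
        \<le> (\<integral>\<omega>. sqrt (\<Sum>k<N. min ((X (s k) \<omega>)^2) T) \<partial>M)"
      unfolding a_eq[symmetric] Z_def w_def .
  qed
qed

end


context detsetup begin

lemma big_sets:
  assumes Xint: "\<And>n. integrable M (X n)"
    and big: "\<And>K. \<exists>T>0. K \<le> (\<integral>\<omega>. (\<integral>y. min (y^2) T \<partial>\<mu> \<omega>) / sqrt ((\<integral>y. min (y^2) T \<partial>\<mu> \<omega>) + 1) \<partial>M)"
  shows "\<exists>F. finite F \<and> F \<noteq> {} \<and> (\<forall>n\<in>F. n0 \<le> n) \<and> K * sqrt (card F) \<le> (\<integral>\<omega>. \<bar>\<Sum>n\<in>F. X n \<omega>\<bar> \<partial>M)"
proof -
  define K' where "K' = max K 1"
  have K': "K' > 0" "K \<le> K'" by (auto simp: K'_def)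
  obtain T where T: "T > 0" and aT: "2 * sqrt 3 * K' + 1 \<le> (\<integral>\<omega>. (\<integral>y. min (y^2) T \<partial>\<mu> \<omega>) / sqrt ((\<integral>y. min (y^2) T \<partial>\<mu> \<omega>) + 1) \<partial>M)"
    using big by blast
  obtain s :: "nat \<Rightarrow> nat" where sm: "strict_mono s" and sn0: "\<And>k. s k \<ge> n0" and
    est: "\<And>N. N \<ge> 1 \<Longrightarrow> sqrt (real N) * ((\<integral>\<omega>. (\<integral>y. min (y^2) T \<partial>\<mu> \<omega>) / sqrt ((\<integral>y. min (y^2) T \<partial>\<mu> \<omega>) + 1) \<partial>M) - 5/2 * (1/5) - T^2 / (2 * real N))
        \<le> (\<integral>\<omega>. sqrt (\<Sum>k<N. min ((X (s k) \<omega>)^2) T) \<partial>M)"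
    using core[OF T, of "1/5" n0] by auto
  define N where "N = nat \<lceil>T^2\<rceil> + 1"
  have N1: "N \<ge> 1" by (simp add: N_def)
  have NT: "T^2 \<le> real N" unfolding N_def by linarith
  have Npos: "real N > 0" using N1 by simp
  have "T^2 / (2 * real N) \<le> 1/2" using NT Npos by (simp add: field_simps)
  then have "2 * sqrt 3 * K' \<le> (\<integral>\<omega>. (\<integral>y. min (y^2) T \<partial>\<mu> \<omega>) / sqrt ((\<integral>y. min (y^2) T \<partial>\<mu> \<omega>) + 1) \<partial>M) - 5/2 * (1/5) - T^2 / (2 * real N)"
    using aT by linarith
  then have "sqrt (real N) * (2 * sqrt 3 * K') \<le> sqrt (real N) * ((\<integral>\<omega>. (\<integral>y. min (y^2) T \<partial>\<mu> \<omega>) / sqrt ((\<integral>y. min (y^2) T \<partial>\<mu> \<omega>) + 1) \<partial>M) - 5/2 * (1/5) - T^2 / (2 * real N))"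
    by (rule mult_left_mono) simp
  then have e1: "sqrt (real N) * (2 * sqrt 3 * K') \<le> (\<integral>\<omega>. sqrt (\<Sum>k<N. min ((X (s k) \<omega>)^2) T) \<partial>M)"
    using est[OF N1] by linarith
  define Y where "Y k = X (s k)" for k
  have Yi: "integrable M (Y k)" for k unfolding Y_def by (rule Xint)
  have Ym[measurable]: "Y k \<in> borel_measurable M" for k unfolding Y_def by simp
  have iabs: "integrable M (\<lambda>\<omega>. \<Sum>k<N. \<bar>Y k \<omega>\<bar>)" using Yi by auto
  have isq: "integrable M (\<lambda>\<omega>. sqrt (\<Sum>k<N. (Y k \<omega>)^2))"
    by (rule Bochner_Integration.integrable_bound[OF iabs]) (auto intro!: AE_I2 simp: sqrt_sum_sq_le sum_nonneg)
  have isq2: "integrable M (\<lambda>\<omega>. sqrt (\<Sum>k<N. min ((Y k \<omega>)^2) T))"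
  proof (rule Bochner_Integration.integrable_bound[OF isq])
    show "(\<lambda>\<omega>. sqrt (\<Sum>k<N. min ((Y k \<omega>)^2) T)) \<in> borel_measurable M" by measurable
    have "0 \<le> (\<Sum>k<N. min ((Y k \<omega>)^2) T)" for \<omega> by (intro sum_nonneg) (simp add: T less_imp_le)
    then show "AE \<omega> in M. norm (sqrt (\<Sum>k<N. min ((Y k \<omega>)^2) T)) \<le> norm (sqrt (\<Sum>k<N. (Y k \<omega>)^2))"
    proof (intro AE_I2)
      fix \<omega>
      have "(\<Sum>k<N. min ((Y k \<omega>)^2) T) \<le> (\<Sum>k<N. (Y k \<omega>)^2)" by (intro sum_mono) simp
      then show "norm (sqrt (\<Sum>k<N. min ((Y k \<omega>)^2) T)) \<le> norm (sqrt (\<Sum>k<N. (Y k \<omega>)^2))"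
        using \<open>\<And>\<omega>. 0 \<le> (\<Sum>k<N. min ((Y k \<omega>)^2) T)\<close>[of \<omega>] by simp
    qed
  qed
  have e2: "(\<integral>\<omega>. sqrt (\<Sum>k<N. min ((Y k \<omega>)^2) T) \<partial>M) \<le> (\<integral>\<omega>. sqrt (\<Sum>k<N. (Y k \<omega>)^2) \<partial>M)"
    by (rule integral_mono[OF isq2 isq]) (auto intro!: sum_mono)
  have iav: "integrable M (\<lambda>\<omega>. avN N (\<lambda>k. Y k \<omega>) abs ((\<lambda>_. 0) \<omega>))"
    by (rule avN_integrable[where Y=Y, OF Yi]) simp
  have e3: "(\<integral>\<omega>. sqrt (\<Sum>k<N. (Y k \<omega>)^2) / sqrt 3 \<partial>M) \<le> (\<integral>\<omega>. avN N (\<lambda>k. Y k \<omega>) abs 0 \<partial>M)"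
    by (rule integral_mono) (use isq iav khintchine in auto)
  obtain \<epsilon> where \<epsilon>: "\<forall>k. \<epsilon> k = 1 \<or> \<epsilon> k = -1"
    and e4: "(\<integral>\<omega>. avN N (\<lambda>k. Y k \<omega>) abs ((\<lambda>_. 0) \<omega>) \<partial>M) \<le> (\<integral>\<omega>. \<bar>(\<lambda>_. 0) \<omega> + (\<Sum>k<N. \<epsilon> k * Y k \<omega>)\<bar> \<partial>M)"
    using sign_select[where Y=Y and x="\<lambda>_. 0" and n=N and M=M, OF Yi] by auto
  have main: "2 * K' * sqrt (real N) \<le> (\<integral>\<omega>. \<bar>\<Sum>k<N. \<epsilon> k * Y k \<omega>\<bar> \<partial>M)"
  proof -
    have "sqrt (real N) * (2 * sqrt 3 * K') / sqrt 3 \<le> (\<integral>\<omega>. sqrt (\<Sum>k<N. (Y k \<omega>)^2) \<partial>M) / sqrt 3"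
      using e1 e2 unfolding Y_def by (intro divide_right_mono) auto
    also have "\<dots> = (\<integral>\<omega>. sqrt (\<Sum>k<N. (Y k \<omega>)^2) / sqrt 3 \<partial>M)" by simp
    finally show ?thesis using e3 e4 by (simp add: ac_simps)
  qed
  define Ip where "Ip = {k \<in> {..<N}. \<epsilon> k = 1}"
  define Im where "Im = {k \<in> {..<N}. \<epsilon> k = -1}"
  have split: "(\<Sum>k<N. \<epsilon> k * Y k \<omega>) = (\<Sum>k\<in>Ip. Y k \<omega>) - (\<Sum>k\<in>Im. Y k \<omega>)" for \<omega>
  proof -
    have "(\<Sum>k<N. \<epsilon> k * Y k \<omega>) = (\<Sum>k<N. (if \<epsilon> k = 1 then Y k \<omega> else 0) - (if \<epsilon> k = -1 then Y k \<omega> else 0))"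
      by (intro sum.cong refl) (use \<epsilon> in force)
    also have "\<dots> = (\<Sum>k\<in>Ip. Y k \<omega>) - (\<Sum>k\<in>Im. Y k \<omega>)"
      unfolding sum_subtractf Ip_def Im_def by (simp only: sum.inter_filter[OF finite_lessThan])
    finally show ?thesis .
  qed
  have ip: "integrable M (\<lambda>\<omega>. \<bar>\<Sum>k\<in>I. Y k \<omega>\<bar>)" for I using Yi by auto
  have "(\<integral>\<omega>. \<bar>\<Sum>k<N. \<epsilon> k * Y k \<omega>\<bar> \<partial>M) \<le> (\<integral>\<omega>. \<bar>\<Sum>k\<in>Ip. Y k \<omega>\<bar> + \<bar>\<Sum>k\<in>Im. Y k \<omega>\<bar> \<partial>M)"
    unfolding split by (rule integral_mono) (use ip Yi in auto)
  also have "\<dots> = (\<integral>\<omega>. \<bar>\<Sum>k\<in>Ip. Y k \<omega>\<bar> \<partial>M) + (\<integral>\<omega>. \<bar>\<Sum>k\<in>Im. Y k \<omega>\<bar> \<partial>M)"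
    using ip by simp
  finally have "2 * K' * sqrt (real N) \<le> (\<integral>\<omega>. \<bar>\<Sum>k\<in>Ip. Y k \<omega>\<bar> \<partial>M) + (\<integral>\<omega>. \<bar>\<Sum>k\<in>Im. Y k \<omega>\<bar> \<partial>M)"
    using main by linarith
  then have "K' * sqrt (real N) \<le> (\<integral>\<omega>. \<bar>\<Sum>k\<in>Ip. Y k \<omega>\<bar> \<partial>M) \<or> K' * sqrt (real N) \<le> (\<integral>\<omega>. \<bar>\<Sum>k\<in>Im. Y k \<omega>\<bar> \<partial>M)"
    by linarith
  moreover have "Ip \<subseteq> {..<N}" "Im \<subseteq> {..<N}" unfolding Ip_def Im_def by auto
  ultimately obtain I where I: "I \<subseteq> {..<N}" and IK: "K' * sqrt (real N) \<le> (\<integral>\<omega>. \<bar>\<Sum>k\<in>I. Y k \<omega>\<bar> \<partial>M)"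
    by blast
  have injs: "inj_on s I" using strict_mono_imp_inj_on[OF sm] by (auto intro: inj_on_subset)
  define F where "F = s ` I"
  have sumF: "(\<Sum>n\<in>F. X n \<omega>) = (\<Sum>k\<in>I. Y k \<omega>)" for \<omega>
    unfolding F_def Y_def by (rule sum.reindex_cong[OF injs refl refl])
  have finF: "finite F" unfolding F_def using I by (auto intro: finite_subset)
  have cardF: "card F \<le> N" unfolding F_def card_image[OF injs]
    using card_mono[OF _ I] by simp
  have pos: "0 < K' * sqrt (real N)" using K' Npos by simp
  have FK: "K' * sqrt (real N) \<le> (\<integral>\<omega>. \<bar>\<Sum>n\<in>F. X n \<omega>\<bar> \<partial>M)" using IK by (simp add: sumF)
  have Fne: "F \<noteq> {}" using FK pos by auto
  have "K * sqrt (card F) \<le> K' * sqrt (card F)" using K' by (intro mult_right_mono) auto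
  also have "\<dots> \<le> K' * sqrt (real N)" using K' cardF by (intro mult_left_mono) auto
  finally have "K * sqrt (card F) \<le> (\<integral>\<omega>. \<bar>\<Sum>n\<in>F. X n \<omega>\<bar> \<partial>M)" using FK by linarith
  moreover have "\<forall>n\<in>F. n0 \<le> n" unfolding F_def using sn0 by auto
  ultimately show ?thesis using finF Fne by blast
qed

end


lemma phi_lower:
  fixes x :: real assumes x: "0 \<le> x"
  shows "sqrt x - 1 \<le> x / sqrt (x + 1)"
proof -
  define u where "u = sqrt x"
  have u: "0 \<le> u" "u^2 = x" using x by (auto simp: u_def)
  have "sqrt (x + 1) \<le> u + 1"
    using u by (intro real_le_lsqrt) (auto simp: power2_eq_square algebra_simps)
  have sp: "0 < sqrt (x + 1)" using x by simp
  have "(u - 1) * sqrt (x + 1) \<le> x"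
  proof (cases "u \<le> 1")
    case True
    then have "(u - 1) * sqrt (x + 1) \<le> 0" using sp by (simp add: mult_nonpos_nonneg)
    then show ?thesis using x by linarith
  next
    case False
    then have "(u - 1) * sqrt (x + 1) \<le> (u - 1) * (u + 1)"
      using \<open>sqrt (x + 1) \<le> u + 1\<close> by (intro mult_left_mono) auto
    also have "\<dots> = x - 1" using u by (simp add: power2_eq_square algebra_simps)
    finally show ?thesis by simp
  qed
  then show ?thesis using sp by (simp add: u_def field_simps)
qed

context detsetup begin

lemma big_from_B:
  assumes notAE: "\<not> (AE \<omega> in M. (\<integral>\<^sup>+ y. ennreal (y^2) \<partial>\<mu> \<omega>) < \<infinity>)"
  shows "\<exists>T>0. K \<le> (\<integral>\<omega>. (\<integral>y. min (y^2) T \<partial>\<mu> \<omega>) / sqrt ((\<integral>y. min (y^2) T \<partial>\<mu> \<omega>) + 1) \<partial>M)"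
proof -
  have nnm[measurable]: "(\<lambda>\<omega>. \<integral>\<^sup>+ y. ennreal (y^2) \<partial>\<mu> \<omega>) \<in> borel_measurable M"
    by (rule measurable_compose[OF mu_sub nn_integral_measurable_subprob_algebra]) simp
  define B where "B = {\<omega> \<in> space M. (\<integral>\<^sup>+ y. ennreal (y^2) \<partial>\<mu> \<omega>) = \<infinity>}"
  have Bm[measurable]: "B \<in> sets M" unfolding B_def by measurable
  have "emeasure M B \<noteq> 0"
  proof
    assume "emeasure M B = 0"
    then have "AE \<omega> in M. (\<integral>\<^sup>+ y. ennreal (y^2) \<partial>\<mu> \<omega>) < \<infinity>"
      by (subst AE_iff_measurable[OF Bm]) (auto simp: B_def, metis top.not_eq_extremum)
    then show False using notAE by simp
  qed
  then have PB: "prob B > 0" by (simp add: emeasure_eq_measure zero_less_measure_iff)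
  define g where "g k \<omega> = (\<integral>y. min (y^2) (real (Suc k)) \<partial>\<mu> \<omega>)" for k \<omega>
  define \<phi> where "\<phi> k \<omega> = g k \<omega> / sqrt (g k \<omega> + 1)" for k \<omega>
  define L where "L = (\<bar>K\<bar> + 1) / prob B"
  have L0: "L > 0" using PB by (simp add: L_def)
  have fmc: "(\<lambda>y. min (y^2) c) \<in> borel_measurable borel" for c :: real by measurable
  have fm: "(\<lambda>y. min (y^2) (real (Suc k))) \<in> borel_measurable borel" for k :: nat by (rule fmc)
  have gm[measurable]: "g k \<in> borel_measurable M" for k unfolding g_def by (rule G_meas[OF fm])
  have \<phi>m[measurable]: "\<phi> k \<in> borel_measurable M" for k unfolding \<phi>_def by measurable
  have g0: "0 \<le> g k \<omega>" if "\<omega> \<in> space M" for k \<omega>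
    unfolding g_def by (rule integral_nonneg_AE) simp
  have gT: "g k \<omega> \<le> real (Suc k)" if "\<omega> \<in> space M" for k \<omega>
    using G_bound[OF that fm[of k], of "real (Suc k)"] unfolding g_def by simp
  have \<phi>0: "0 \<le> \<phi> k \<omega>" if "\<omega> \<in> space M" for k \<omega> using g0[OF that] by (simp add: \<phi>_def)
  have \<phi>g: "\<phi> k \<omega> \<le> g k \<omega>" if "\<omega> \<in> space M" for k \<omega>
  proof -
    have "1 \<le> sqrt (g k \<omega> + 1)" using g0[OF that] by simp
    then show ?thesis unfolding \<phi>_def using g0[OF that]
      by (simp add: divide_le_eq mult_le_cancel_left1 order_trans[OF _ mult_left_mono])
  qed
  have key: "eventually (\<lambda>k. L \<le> \<phi> k \<omega>) sequentially" if \<omega>B: "\<omega> \<in> B" for \<omega>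
  proof -
    have \<omega>: "\<omega> \<in> space M" using \<omega>B by (simp add: B_def)
    interpret P: prob_space "\<mu> \<omega>" by (rule mu_prob[OF \<omega>])
    have fmu: "(\<lambda>y. min (y^2) c) \<in> borel_measurable (\<mu> \<omega>)" for c :: real
      using fmc[of c] by (simp only: measurable_cong_sets[OF mu_sets[OF \<omega>] refl])
    have gnn: "ennreal (g k \<omega>) = (\<integral>\<^sup>+ y. ennreal (min (y^2) (real (Suc k))) \<partial>\<mu> \<omega>)" for k
      unfolding g_def
      by (rule nn_integral_eq_integral[symmetric])
         (auto intro!: P.integrable_const_bound[where B="real (Suc k)"] fmu)
    have mono: "g k \<omega> \<le> g k' \<omega>" if "k \<le> k'" for k k'
      unfolding g_def using that
      by (intro integral_mono P.integrable_const_bound[where B="real (Suc k)"] P.integrable_const_bound[where B="real (Suc k')"])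
         (auto intro: fmu)
    have "(SUP k. (\<integral>\<^sup>+ y. ennreal (min (y^2) (real (Suc k))) \<partial>\<mu> \<omega>)) = (\<integral>\<^sup>+ y. (SUP k. ennreal (min (y^2) (real (Suc k)))) \<partial>\<mu> \<omega>)"
      by (rule nn_integral_monotone_convergence_SUP[symmetric])
         (auto simp: incseq_def le_fun_def intro!: ennreal_leI min.mono fmu)
    also have "\<dots> = (\<integral>\<^sup>+ y. ennreal (y^2) \<partial>\<mu> \<omega>)"
    proof (intro nn_integral_cong antisym)
      fix y :: real
      show "(SUP k. ennreal (min (y^2) (real (Suc k)))) \<le> ennreal (y^2)"
        by (intro SUP_least ennreal_leI) simp
      obtain k :: nat where "y^2 \<le> real (Suc k)"
        using reals_Archimedean2[of "y^2"] by (metis less_imp_le of_nat_Suc less_Suc_eq_le of_nat_le_iff order_trans real_arch_simple)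
      then have "ennreal (y^2) = ennreal (min (y^2) (real (Suc k)))" by simp
      also have "\<dots> \<le> (SUP k. ennreal (min (y^2) (real (Suc k))))" by (rule SUP_upper) simp
      finally show "ennreal (y^2) \<le> (SUP k. ennreal (min (y^2) (real (Suc k))))" .
    qed
    also have "\<dots> = \<infinity>" using \<omega>B by (simp add: B_def)
    finally have sup: "(SUP k. ennreal (g k \<omega>)) = \<infinity>" by (simp add: gnn)
    define R where "R = (L + 1)^2"
    have "ennreal R < (SUP k. ennreal (g k \<omega>))" unfolding sup by simp
    then obtain k0 where "ennreal R < ennreal (g k0 \<omega>)" by (auto simp: less_SUP_iff)
    then have k0: "R < g k0 \<omega>" using ennreal_less_iff[of R "g k0 \<omega>"] by (simp add: R_def)
    show ?thesis
    proof (rule eventually_sequentiallyI[of k0])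
      fix k assume "k0 \<le> k"
      then have Rg: "R \<le> g k \<omega>" using mono[of k0 k] k0 by simp
      have "L + 1 \<le> sqrt (g k \<omega>)" using Rg L0 unfolding R_def by (intro real_le_rsqrt) simp
      then show "L \<le> \<phi> k \<omega>" using phi_lower[OF g0[OF \<omega>, of k]] unfolding \<phi>_def by linarith
    qed
  qed
  define h where "h k \<omega> = min (\<phi> k \<omega>) L * indicator B \<omega>" for k \<omega>
  have hm[measurable]: "h k \<in> borel_measurable M" for k unfolding h_def by measurable
  have conv: "(\<lambda>k. \<integral>\<omega>. h k \<omega> \<partial>M) \<longlonglongrightarrow> (\<integral>\<omega>. L * indicator B \<omega> \<partial>M)"
  proof (rule integral_dominated_convergence[where w="\<lambda>_. L"])
    show "(\<lambda>\<omega>. L * indicator B \<omega>) \<in> borel_measurable M" by measurable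
    show "h k \<in> borel_measurable M" for k unfolding h_def by measurable
    show "integrable M (\<lambda>_. L)" by simp
    show "AE \<omega> in M. (\<lambda>k. h k \<omega>) \<longlonglongrightarrow> L * indicator B \<omega>"
    proof (rule AE_I2)
      fix \<omega> assume \<omega>: "\<omega> \<in> space M"
      show "(\<lambda>k. h k \<omega>) \<longlonglongrightarrow> L * indicator B \<omega>"
      proof (cases "\<omega> \<in> B")
        case True
        have "eventually (\<lambda>k. h k \<omega> = L * indicator B \<omega>) sequentially"
          using key[OF True] by eventually_elim (simp add: h_def True)
        then show ?thesis by (rule tendsto_eventually)
      next
        case False then show ?thesis by (simp add: h_def)
      qed
    qed
    show "AE \<omega> in M. norm (h k \<omega>) \<le> L" for k
      by (rule AE_I2) (use \<phi>0 L0 in \<open>auto simp: h_def indicator_def\<close>)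
  qed
  have "(\<integral>\<omega>. L * indicator B \<omega> \<partial>M) = \<bar>K\<bar> + 1" using PB by (simp add: L_def)
  then have "eventually (\<lambda>k. K < (\<integral>\<omega>. h k \<omega> \<partial>M)) sequentially"
    using order_tendstoD(1)[OF conv, of K] by simp
  then obtain k where k: "K < (\<integral>\<omega>. h k \<omega> \<partial>M)" by (auto simp: eventually_sequentially)
  have "(\<integral>\<omega>. h k \<omega> \<partial>M) \<le> (\<integral>\<omega>. \<phi> k \<omega> \<partial>M)"
  proof (rule integral_mono)
    show "integrable M (h k)"
      by (rule bint[where D=L]) (use \<phi>0 L0 in \<open>auto simp: h_def indicator_def\<close>)
    show "integrable M (\<phi> k)"
    proof (rule bint[where D="real (Suc k)"])
      fix \<omega> assume \<omega>: "\<omega> \<in> space M"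
      show "\<bar>\<phi> k \<omega>\<bar> \<le> real (Suc k)" using \<phi>0[OF \<omega>, of k] \<phi>g[OF \<omega>, of k] gT[OF \<omega>, of k] by linarith
    qed simp
    show "h k \<omega> \<le> \<phi> k \<omega>" if "\<omega> \<in> space M" for \<omega>
      using \<phi>0[OF that] by (auto simp: h_def indicator_def)
  qed
  then show ?thesis
    using k by (intro exI[of _ "real (Suc k)"]) (simp add: \<phi>_def g_def)
qed

end


lemma downclosed_eq:
  fixes K :: "nat set"
  assumes fin: "finite K" and dc: "\<And>k k'. k \<in> K \<Longrightarrow> k' < k \<Longrightarrow> k' \<in> K"
  shows "K = {..<card K}"
proof
  show "K \<subseteq> {..<card K}"
  proof
    fix k assume k: "k \<in> K"
    have "{..k} \<subseteq> K" using dc k by (auto simp: le_less)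
    then have "card {..k} \<le> card K" by (rule card_mono[OF fin])
    then show "k \<in> {..<card K}" by simp
  qed
  show "{..<card K} \<subseteq> K"
  proof
    fix j assume j: "j \<in> {..<card K}"
    show "j \<in> K"
    proof (rule ccontr)
      assume "j \<notin> K"
      then have "K \<subseteq> {..<j}" using dc by (metis lessThan_iff not_less_iff_gr_or_eq subsetI)
      then have "card K \<le> j" using card_mono[of "{..<j}" K] by simp
      then show False using j by simp
    qed
  qed
qed

lemma enum_init:
  fixes S :: "nat set"
  assumes inf: "infinite S"
  shows "enumerate S ` {..<card (S \<inter> {..<b})} = S \<inter> {..<b}"
proof -
  define K where "K = {k. enumerate S k < b}"
  have bij: "bij_betw (enumerate S) UNIV S" by (rule bij_enumerate[OF inf])
  have inj: "inj (enumerate S)" by (rule inj_enumerate[OF inf])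
  have img: "enumerate S ` K = S \<inter> {..<b}"
  proof
    show "enumerate S ` K \<subseteq> S \<inter> {..<b}" using enumerate_in_set[OF inf] by (auto simp: K_def)
    show "S \<inter> {..<b} \<subseteq> enumerate S ` K"
    proof
      fix x assume x: "x \<in> S \<inter> {..<b}"
      then obtain k where "enumerate S k = x" using bij unfolding bij_betw_def by (metis IntD1 imageE)
      then show "x \<in> enumerate S ` K" using x by (auto simp: K_def)
    qed
  qed
  have finK: "finite K"
  proof -
    have "K = enumerate S -` (S \<inter> {..<b})" using enumerate_in_set[OF inf] by (auto simp: K_def)
    then show ?thesis using finite_vimageI[OF _ inj, of "S \<inter> {..<b}"] by simp
  qed
  have cardK: "card K = card (S \<inter> {..<b})"
    using card_image[OF inj_on_subset[OF inj subset_UNIV], of K] img by simp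
  have "K = {..<card K}"
  proof (rule downclosed_eq[OF finK])
    fix k k' assume "k \<in> K" "k' < k"
    then show "k' \<in> K" using enumerate_mono[OF _ inf, of k' k] by (auto simp: K_def)
  qed
  then show ?thesis using img cardK by simp
qed

context detsetup begin

lemma glue:
  assumes Xint: "\<And>n. integrable M (X n)"
    and BS: "\<And>n0 K. \<exists>F. finite F \<and> F \<noteq> {} \<and> (\<forall>n\<in>F. n0 \<le> n) \<and> K * sqrt (card F) \<le> (\<integral>\<omega>. \<bar>\<Sum>n\<in>F. X n \<omega>\<bar> \<partial>M)"
  shows "\<exists>m::nat\<Rightarrow>nat. strict_mono m \<and> (\<forall>j. \<exists>N\<ge>1. real j * sqrt (real N) \<le> (\<integral>\<omega>. \<bar>\<Sum>k<N. X (m k) \<omega>\<bar> \<partial>M))"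
proof -
  define c where "c P = (\<integral>\<omega>. \<bar>\<Sum>n\<in>P. X n \<omega>\<bar> \<partial>M)" for P
  define good where "good P j F \<longleftrightarrow> finite F \<and> F \<noteq> {} \<and> (\<forall>n\<in>F. Suc (\<Sum>x\<in>P. x) \<le> n) \<and>
      (c P + real j * sqrt (real (card P) + 1)) * sqrt (card F) \<le> c F" for P j F
  define nxt where "nxt P j = (SOME F. good P j F)" for P j
  have nxt: "good P j (nxt P j)" for P j
    unfolding nxt_def by (rule someI_ex) (use BS in \<open>auto simp: good_def c_def\<close>)
  define PP where "PP = rec_nat {} (\<lambda>j P. P \<union> nxt P j)"
  have PP0: "PP 0 = {}" and PPS: "PP (Suc j) = PP j \<union> nxt (PP j) j" for j by (simp_all add: PP_def)
  have finPP: "finite (PP j)" for j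
    by (induction j) (use nxt in \<open>auto simp: PP0 PPS good_def\<close>)
  have bigger: "n \<in> nxt (PP j) j \<Longrightarrow> Suc (\<Sum>x\<in>PP j. x) \<le> n" for n j using nxt by (auto simp: good_def)
  have le_sum: "x \<in> PP j \<Longrightarrow> x \<le> (\<Sum>x\<in>PP j. x)" for x j by (rule member_le_sum) (auto simp: finPP)
  have PPmono: "PP j \<subseteq> PP (j + d)" for j d by (induction d) (auto simp: PPS)
  have summono: "(\<Sum>x\<in>PP j. x) \<le> (\<Sum>x\<in>PP (j + d). x)" for j d
    by (rule sum_mono2[OF finPP PPmono]) simp
  define S where "S = (\<Union>j. PP j)"
  have bk: "x \<in> PP (j + d) \<Longrightarrow> x < Suc (\<Sum>x\<in>PP j. x) \<Longrightarrow> x \<in> PP j" for x j d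
  proof (induction d)
    case (Suc d)
    show ?case
    proof (cases "x \<in> PP (j + d)")
      case True then show ?thesis using Suc by simp
    next
      case False
      then have "x \<in> nxt (PP (j + d)) (j + d)" using Suc.prems(1) by (simp add: PPS)
      then have "Suc (\<Sum>x\<in>PP (j + d). x) \<le> x" by (rule bigger)
      then show ?thesis using summono[of j d] Suc.prems(2) by simp
    qed
  qed simp
  have PPeq: "PP j = S \<inter> {..<Suc (\<Sum>x\<in>PP j. x)}" for j
  proof
    show "PP j \<subseteq> S \<inter> {..<Suc (\<Sum>x\<in>PP j. x)}" using le_sum[of _ j] by (auto simp: S_def less_Suc_eq_le)
    show "S \<inter> {..<Suc (\<Sum>x\<in>PP j. x)} \<subseteq> PP j"
    proof
      fix x assume "x \<in> S \<inter> {..<Suc (\<Sum>x\<in>PP j. x)}"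
      then obtain i where i: "x \<in> PP i" "x < Suc (\<Sum>x\<in>PP j. x)" by (auto simp: S_def)
      show "x \<in> PP j"
      proof (cases "i \<le> j")
        case True
        then show ?thesis using PPmono[of i "j - i"] i by auto
      next
        case False
        then show ?thesis using bk[of x j "i - j"] i by simp
      qed
    qed
  qed
  have disj: "PP j \<inter> nxt (PP j) j = {}" for j
    using le_sum[of _ j] bigger[of _ j] by (auto simp: disjoint_iff) (meson Suc_le_eq not_le)
  have cardPP: "j \<le> card (PP j)" for j
  proof (induction j)
    case (Suc j)
    have "card (PP (Suc j)) = card (PP j) + card (nxt (PP j) j)"
      unfolding PPS using nxt[of "PP j" j] finPP[of j] disj[of j] by (simp add: good_def card_Un_disjoint)
    moreover have "card (nxt (PP j) j) \<ge> 1" using nxt[of "PP j" j] by (simp add: good_def card_gt_0_iff Suc_le_eq)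
    ultimately show ?case using Suc by simp
  qed simp
  have infS: "infinite S"
  proof
    assume "finite S"
    then have "card (PP (Suc (card S))) \<le> card S" by (intro card_mono) (auto simp: S_def)
    then show False using cardPP[of "Suc (card S)"] by simp
  qed
  define m where "m = enumerate S"
  have sm: "strict_mono m" unfolding m_def by (rule strict_monoI) (rule enumerate_mono[OF _ infS])
  have initial: "m ` {..<card (PP j)} = PP j" for j
    using enum_init[OF infS, of "Suc (\<Sum>x\<in>PP j. x)"] PPeq[of j] unfolding m_def by simp
  have Xi_abs: "integrable M (\<lambda>\<omega>. \<bar>\<Sum>n\<in>P. X n \<omega>\<bar>)" for P using Xint by auto
  show ?thesis
  proof (intro exI[where x=m] conjI allI sm)
    fix j
    define N where "N = card (PP (Suc j))"
    define G where "G = nxt (PP j) j"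
    have gG: "good (PP j) j G" unfolding G_def by (rule nxt)
    define p where "p = card (PP j)"
    define g where "g = card G"
    have g1: "g \<ge> 1" using gG by (simp add: good_def g_def card_gt_0_iff Suc_le_eq)
    have Neq: "N = p + g" unfolding N_def p_def g_def G_def PPS
      using gG finPP[of j] disj[of j] by (simp add: good_def G_def card_Un_disjoint)
    have N1: "N \<ge> 1" using Neq g1 by simp
    have injm: "inj_on m {..<N}" using strict_mono_imp_inj_on[OF sm] by (auto intro: inj_on_subset)
    have sumeq: "(\<Sum>k<N. X (m k) \<omega>) = (\<Sum>n\<in>PP j. X n \<omega>) + (\<Sum>n\<in>G. X n \<omega>)" for \<omega>
    proof -
      have "(\<Sum>k<N. X (m k) \<omega>) = (\<Sum>n\<in>m ` {..<N}. X n \<omega>)"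
        by (rule sum.reindex_cong[OF injm refl refl, symmetric])
      also have "m ` {..<N} = PP j \<union> G" unfolding N_def G_def using initial[of "Suc j"] by (simp only: PPS)
      also have "(\<Sum>n\<in>PP j \<union> G. X n \<omega>) = (\<Sum>n\<in>PP j. X n \<omega>) + (\<Sum>n\<in>G. X n \<omega>)"
        using gG finPP[of j] disj[of j] by (intro sum.union_disjoint) (auto simp: good_def G_def)
      finally show ?thesis .
    qed
    have c0: "0 \<le> c (PP j)" unfolding c_def by simp
    have cG: "(c (PP j) + real j * sqrt (real p + 1)) * sqrt g \<le> c G" using gG by (simp add: good_def p_def g_def)
    have tri: "c G - c (PP j) \<le> (\<integral>\<omega>. \<bar>\<Sum>k<N. X (m k) \<omega>\<bar> \<partial>M)"
    proof -
      have "c G \<le> (\<integral>\<omega>. \<bar>\<Sum>k<N. X (m k) \<omega>\<bar> + \<bar>\<Sum>n\<in>PP j. X n \<omega>\<bar> \<partial>M)"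
        unfolding c_def
      proof (rule integral_mono)
        show "integrable M (\<lambda>\<omega>. \<bar>\<Sum>k<N. X (m k) \<omega>\<bar> + \<bar>\<Sum>n\<in>PP j. X n \<omega>\<bar>)" using Xint by auto
        show "integrable M (\<lambda>\<omega>. \<bar>\<Sum>n\<in>G. X n \<omega>\<bar>)" by (rule Xi_abs)
        fix \<omega> show "\<bar>\<Sum>n\<in>G. X n \<omega>\<bar> \<le> \<bar>\<Sum>k<N. X (m k) \<omega>\<bar> + \<bar>\<Sum>n\<in>PP j. X n \<omega>\<bar>"
          unfolding sumeq by linarith
      qed
      also have "\<dots> = (\<integral>\<omega>. \<bar>\<Sum>k<N. X (m k) \<omega>\<bar> \<partial>M) + c (PP j)"
        unfolding c_def using Xint by (subst Bochner_Integration.integral_add) auto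
      finally show ?thesis by simp
    qed
    have sg: "1 \<le> sqrt (real g)" using g1 by simp
    have "real j * sqrt (real N) \<le> real j * (sqrt (real p + 1) * sqrt (real g))"
    proof (rule mult_left_mono)
      have "real p * 1 \<le> real p * real g" using g1 by (intro mult_left_mono) auto
      then have "real N \<le> (real p + 1) * real g" unfolding Neq by (simp add: algebra_simps)
      then show "sqrt (real N) \<le> sqrt (real p + 1) * sqrt (real g)"
        by (simp add: real_sqrt_mult[symmetric])
    qed simp
    also have "\<dots> \<le> (c (PP j) + real j * sqrt (real p + 1)) * sqrt g - c (PP j)"
    proof -
      have "c (PP j) * 1 \<le> c (PP j) * sqrt g" by (rule mult_left_mono[OF sg c0])
      moreover have "(c (PP j) + real j * sqrt (real p + 1)) * sqrt g = c (PP j) * sqrt g + real j * (sqrt (real p + 1) * sqrt (real g))"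
        by (simp add: algebra_simps)
      ultimately show ?thesis by linarith
    qed
    also have "\<dots> \<le> (\<integral>\<omega>. \<bar>\<Sum>k<N. X (m k) \<omega>\<bar> \<partial>M)" using cG tri by linarith
    finally show "\<exists>N\<ge>1. real j * sqrt (real N) \<le> (\<integral>\<omega>. \<bar>\<Sum>k<N. X (m k) \<omega>\<bar> \<partial>M)"
      using N1 by blast
  qed
qed

end


lemma abs_le_powr: "1 \<le> p \<Longrightarrow> \<bar>y\<bar> \<le> 1 + \<bar>y\<bar> powr p" for y p :: real
proof (cases "\<bar>y\<bar> \<le> 1")
  case True then show ?thesis by (smt (verit) powr_ge_zero)
next
  case False
  assume p: "1 \<le> p"
  have "\<bar>y\<bar> powr 1 \<le> \<bar>y\<bar> powr p" using False p by (intro powr_mono) auto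
  then show ?thesis using False by (smt (verit) powr_one_gt_zero_iff)
qed

lemma (in prob_space) nn_abs_le:
  assumes "1 \<le> p" "f \<in> borel_measurable M"
  shows "(\<integral>\<^sup>+ x. ennreal \<bar>f x\<bar> \<partial>M) \<le> 1 + Lp_pow M p f"
proof -
  have "(\<integral>\<^sup>+ x. ennreal \<bar>f x\<bar> \<partial>M) \<le> (\<integral>\<^sup>+ x. 1 + ennreal (\<bar>f x\<bar> powr p) \<partial>M)"
  proof (intro nn_integral_mono)
    fix x
    have "ennreal \<bar>f x\<bar> \<le> ennreal (1 + \<bar>f x\<bar> powr p)" by (rule ennreal_leI) (rule abs_le_powr[OF assms(1)])
    also have "\<dots> = 1 + ennreal (\<bar>f x\<bar> powr p)" by (subst ennreal_plus) auto
    finally show "ennreal \<bar>f x\<bar> \<le> 1 + ennreal (\<bar>f x\<bar> powr p)" .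
  qed
  also have "\<dots> = (\<integral>\<^sup>+ x. 1 \<partial>M) + Lp_pow M p f"
    unfolding Lp_pow_def using assms(2) by (intro nn_integral_add) auto
  also have "(\<integral>\<^sup>+ x. 1 \<partial>M) = 1" by (simp add: emeasure_space_1)
  finally show ?thesis .
qed

theorem mainTheorem9:
  fixes M :: "'a measure" and X :: "nat \<Rightarrow> 'a \<Rightarrow> real"
    and \<mu> :: "'a \<Rightarrow> real measure" and p :: real
  assumes "prob_space M"
    and "1 \<le> p" and "p < 2"
    and "determining M X"
    and "(SUP n. Lp_pow M p (X n)) < \<infinity>"
    and "unif_integrable M (\<lambda>n x. \<bar>X n x\<bar> powr p)"
    and "weak_Lp_to_zero M p X"
    and "limit_random_measure M X \<mu>"
    and "\<forall>m :: nat \<Rightarrow> nat. strict_mono m \<longrightarrow>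
           (SUP N \<in> {1..}. Lp_pow M p (\<lambda>x. (\<Sum>k<N. X (m k) x) / sqrt (real N))) < \<infinity>"
  shows "AE x in M. (\<integral>\<^sup>+ y. ennreal (y\<^sup>2) \<partial>\<mu> x) < \<infinity>"
proof (rule ccontr)
  assume notAE: "\<not> (AE x in M. (\<integral>\<^sup>+ y. ennreal (y\<^sup>2) \<partial>\<mu> x) < \<infinity>)"
  interpret D: detsetup M X \<mu>
    unfolding detsetup_def detsetup_axioms_def using assms by auto
  have p1: "1 \<le> p" by fact
  have Xm[measurable]: "X n \<in> borel_measurable M" for n by (rule D.X_meas)
  have Xint: "integrable M (X n)" for n
  proof (rule integrableI_bounded)
    show "X n \<in> borel_measurable M" by simp
    have "Lp_pow M p (X n) \<le> (SUP n. Lp_pow M p (X n))" by (rule SUP_upper) simp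
    then have "Lp_pow M p (X n) < \<infinity>" using assms(5) by (simp add: le_less_trans)
    then have "1 + Lp_pow M p (X n) < \<infinity>" by (simp add: ennreal_add_less_top)
    then show "(\<integral>\<^sup>+ x. ennreal (norm (X n x)) \<partial>M) < \<infinity>"
      using D.nn_abs_le[OF p1 Xm[of n]] by (simp add: le_less_trans)
  qed
  have big: "\<And>K. \<exists>T>0. K \<le> (\<integral>\<omega>. (\<integral>y. min (y^2) T \<partial>\<mu> \<omega>) / sqrt ((\<integral>y. min (y^2) T \<partial>\<mu> \<omega>) + 1) \<partial>M)"
    using D.big_from_B notAE by simp
  have BS: "\<And>n0 K. \<exists>F. finite F \<and> F \<noteq> {} \<and> (\<forall>n\<in>F. n0 \<le> n) \<and> K * sqrt (card F) \<le> (\<integral>\<omega>. \<bar>\<Sum>n\<in>F. X n \<omega>\<bar> \<partial>M)"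
    by (rule D.big_sets[OF Xint big])
  obtain m :: "nat \<Rightarrow> nat" where sm: "strict_mono m"
    and unb: "\<And>j. \<exists>N\<ge>1. real j * sqrt (real N) \<le> (\<integral>\<omega>. \<bar>\<Sum>k<N. X (m k) \<omega>\<bar> \<partial>M)"
    using D.glue[OF Xint BS] by blast
  define C where "C = (SUP N \<in> {1..}. Lp_pow M p (\<lambda>x. (\<Sum>k<N. X (m k) x) / sqrt (real N)))"
  have Cfin: "C < \<infinity>" using assms(9) sm by (simp add: C_def)
  define C' where "C' = enn2real C"
  have CC': "C = ennreal C'" using Cfin by (simp add: C'_def less_top)
  have bound: "(\<integral>\<omega>. \<bar>\<Sum>k<N. X (m k) \<omega>\<bar> \<partial>M) \<le> sqrt (real N) * (1 + C')" if N: "N \<ge> 1" for N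
  proof -
    define f where "f x = (\<Sum>k<N. X (m k) x) / sqrt (real N)" for x
    have fm[measurable]: "f \<in> borel_measurable M" unfolding f_def by measurable
    have fi: "integrable M f" unfolding f_def using Xint by auto
    have "Lp_pow M p f \<le> C" unfolding C_def f_def by (rule SUP_upper) (use N in simp)
    then have "(\<integral>\<^sup>+ x. ennreal \<bar>f x\<bar> \<partial>M) \<le> 1 + C"
      using D.nn_abs_le[OF p1 fm] by (meson add_left_mono order_trans)
    moreover have "(\<integral>\<^sup>+ x. ennreal \<bar>f x\<bar> \<partial>M) = ennreal (\<integral>x. \<bar>f x\<bar> \<partial>M)"
      by (rule nn_integral_eq_integral) (use fi in auto)
    moreover have C'0: "0 \<le> C'" by (simp add: C'_def)
    moreover have "1 + C = ennreal (1 + C')" unfolding CC' using C'0 by (subst ennreal_plus) auto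
    ultimately have "ennreal (\<integral>x. \<bar>f x\<bar> \<partial>M) \<le> ennreal (1 + C')"
      by (metis order_trans order_refl)
    then have If: "(\<integral>x. \<bar>f x\<bar> \<partial>M) \<le> 1 + C'"
      by (subst (asm) ennreal_le_iff) (auto simp: C'_def)
    have sN: "sqrt (real N) > 0" using N by simp
    have "(\<integral>\<omega>. \<bar>\<Sum>k<N. X (m k) \<omega>\<bar> \<partial>M) = (\<integral>\<omega>. sqrt (real N) * \<bar>f \<omega>\<bar> \<partial>M)"
      unfolding f_def using sN by (intro Bochner_Integration.integral_cong) (auto simp: abs_divide)
    also have "\<dots> = sqrt (real N) * (\<integral>\<omega>. \<bar>f \<omega>\<bar> \<partial>M)" by simp
    also have "\<dots> \<le> sqrt (real N) * (1 + C')" using If sN by (intro mult_left_mono) auto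
    finally show ?thesis .
  qed
  define j where "j = nat \<lceil>1 + C'\<rceil> + 1"
  obtain N where N: "N \<ge> 1" and jN: "real j * sqrt (real N) \<le> (\<integral>\<omega>. \<bar>\<Sum>k<N. X (m k) \<omega>\<bar> \<partial>M)"
    using unb[of j] by blast
  have "real j * sqrt (real N) \<le> (1 + C') * sqrt (real N)" using jN bound[OF N] by (simp add: mult.commute)
  then have "real j \<le> 1 + C'" using N by simp
  moreover have "1 + C' < real j" unfolding j_def by linarith
  ultimately show False by simp
qed


end
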